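(* Let $\mathscr{A}$ be a strict monoidal category and $\mathscr{B}$ a strict braided monoidal category with braiding $c$. Let $\mathrm{Frob}(\mathscr{A},\mathscr{B})$ be the category whose objects are Frobenius monoidal functors $\mathscr{A}\to\mathscr{B}$ and whose morphisms are all natural transformations between them. For $F,G$ in $\mathrm{Frob}(\mathscr{A},\mathscr{B})$, let $(F\otimes G)A=FA\otimes GA$, with monoidal structure $r=(r^F_{A,B}\otimes r^G_{A,B})(1\otimes c^{-1}_{FB,GA}\otimes 1)$, $r_0=r^F_0\otimes r^G_0$, and comonoidal structure $i=(1\otimes c_{FB,GA}\otimes 1)(i^F_{A,B}\otimes i^G_{A,B})$, $i_0=i^F_0\otimes i^G_0$. Then $F\otimes G$ is a Frobenius monoidal functor, and with this pointwise tensor product, unit the constant functor at $I$, and braiding $(c_{F,G})_A=c_{FA,GA}$, $\mathrm{Frob}(\mathscr{A},\mathscr{B})$ is a braided monoidal category.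
   Context: A Frobenius monoidal functor is a functor $F$ that is monoidal $(F,r,r_0)$ (with $r_{A,B}:FA\otimes FB\to F(A\otimes B)$, $r_0:I\to FI$) and comonoidal $(F,i,i_0)$ (with $i_{A,B}:F(A\otimes B)\to FA\otimes FB$, $i_0:FI\to I$), such that for all objects $A,B,C$: $i_{A,B\otimes C}\circ r_{A\otimes B,C} = (1\otimes r_{B,C})\circ(i_{A,B}\otimes 1)$ and $i_{A\otimes B,C}\circ r_{A,B\otimes C} = (r_{A,B}\otimes 1)\circ(1\otimes i_{B,C})$. *)

theory Defs
  imports Main
begin

record ('o,'m) cat =
  Ob  :: "'o set"
  Ar  :: "'m set"
  Dm  :: "'m \<Rightarrow> 'o"
  Cd  :: "'m \<Rightarrow> 'o"
  Idn :: "'o \<Rightarrow> 'm"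
  Cmp :: "'m \<Rightarrow> 'm \<Rightarrow> 'm"   (* Cmp C g f = g \<circ> f, defined when Cd f = Dm g *)

record ('o,'m) moncat = "('o,'m) cat" +
  Tob :: "'o \<Rightarrow> 'o \<Rightarrow> 'o"
  Tar :: "'m \<Rightarrow> 'm \<Rightarrow> 'm"
  Unt  :: "'o"
  Asc :: "'o \<Rightarrow> 'o \<Rightarrow> 'o \<Rightarrow> 'm"   (* associator (A\<otimes>B)\<otimes>C \<rightarrow> A\<otimes>(B\<otimes>C) *)
  Lu  :: "'o \<Rightarrow> 'm"               (* left unitor I\<otimes>A \<rightarrow> A *)
  Ru  :: "'o \<Rightarrow> 'm"               (* right unitor A\<otimes>I \<rightarrow> A *)

record ('o,'m) bmoncat = "('o,'m) moncat" +
  Brd :: "'o \<Rightarrow> 'o \<Rightarrow> 'm"         (* braiding A\<otimes>B \<rightarrow> B\<otimes>A *)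

definition category :: "('o,'m,'z) cat_scheme \<Rightarrow> bool" where
  "category C \<longleftrightarrow>
     (\<forall>f\<in>Ar C. Dm C f \<in> Ob C \<and> Cd C f \<in> Ob C) \<and>
     (\<forall>X\<in>Ob C. Idn C X \<in> Ar C \<and> Dm C (Idn C X) = X \<and> Cd C (Idn C X) = X) \<and>
     (\<forall>f\<in>Ar C. \<forall>g\<in>Ar C. Cd C f = Dm C g \<longrightarrow>
        Cmp C g f \<in> Ar C \<and> Dm C (Cmp C g f) = Dm C f \<and> Cd C (Cmp C g f) = Cd C g) \<and>
     (\<forall>f\<in>Ar C. Cmp C (Idn C (Cd C f)) f = f \<and> Cmp C f (Idn C (Dm C f)) = f) \<and>
     (\<forall>f\<in>Ar C. \<forall>g\<in>Ar C. \<forall>h\<in>Ar C. Cd C f = Dm C g \<longrightarrow> Cd C g = Dm C h \<longrightarrow>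
        Cmp C h (Cmp C g f) = Cmp C (Cmp C h g) f)"

definition hom :: "('o,'m,'z) cat_scheme \<Rightarrow> 'm \<Rightarrow> 'o \<Rightarrow> 'o \<Rightarrow> bool" where
  "hom C f X Y \<longleftrightarrow> f \<in> Ar C \<and> Dm C f = X \<and> Cd C f = Y"

definition is_inverse :: "('o,'m,'z) cat_scheme \<Rightarrow> 'm \<Rightarrow> 'm \<Rightarrow> bool" where
  "is_inverse C f g \<longleftrightarrow> g \<in> Ar C \<and> Dm C g = Cd C f \<and> Cd C g = Dm C f \<and>
     Cmp C g f = Idn C (Dm C f) \<and> Cmp C f g = Idn C (Cd C f)"

definition iso :: "('o,'m,'z) cat_scheme \<Rightarrow> 'm \<Rightarrow> bool" where
  "iso C f \<longleftrightarrow> f \<in> Ar C \<and> (\<exists>g. is_inverse C f g)"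

definition cinv :: "('o,'m,'z) cat_scheme \<Rightarrow> 'm \<Rightarrow> 'm" where
  "cinv C f = (THE g. is_inverse C f g)"

definition monoidal_category :: "('o,'m,'z) moncat_scheme \<Rightarrow> bool" where
  "monoidal_category C \<longleftrightarrow>
     category C \<and> Unt C \<in> Ob C \<and>
     (\<forall>X\<in>Ob C. \<forall>Y\<in>Ob C. Tob C X Y \<in> Ob C) \<and>
     (\<forall>f\<in>Ar C. \<forall>g\<in>Ar C. hom C (Tar C f g) (Tob C (Dm C f) (Dm C g)) (Tob C (Cd C f) (Cd C g))) \<and>
     (\<forall>X\<in>Ob C. \<forall>Y\<in>Ob C. Tar C (Idn C X) (Idn C Y) = Idn C (Tob C X Y)) \<and>
     (\<forall>f\<in>Ar C. \<forall>g\<in>Ar C. \<forall>f'\<in>Ar C. \<forall>g'\<in>Ar C. Cd C f = Dm C g \<longrightarrow> Cd C f' = Dm C g' \<longrightarrow>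
        Tar C (Cmp C g f) (Cmp C g' f') = Cmp C (Tar C g g') (Tar C f f')) \<and>
     (\<forall>X\<in>Ob C. \<forall>Y\<in>Ob C. \<forall>Z\<in>Ob C. iso C (Asc C X Y Z) \<and>
        hom C (Asc C X Y Z) (Tob C (Tob C X Y) Z) (Tob C X (Tob C Y Z))) \<and>
     (\<forall>X\<in>Ob C. iso C (Lu C X) \<and> hom C (Lu C X) (Tob C (Unt C) X) X \<and>
        iso C (Ru C X) \<and> hom C (Ru C X) (Tob C X (Unt C)) X) \<and>
     (\<forall>f\<in>Ar C. \<forall>g\<in>Ar C. \<forall>h\<in>Ar C.
        Cmp C (Asc C (Cd C f) (Cd C g) (Cd C h)) (Tar C (Tar C f g) h) =
        Cmp C (Tar C f (Tar C g h)) (Asc C (Dm C f) (Dm C g) (Dm C h))) \<and>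
     (\<forall>f\<in>Ar C. Cmp C (Lu C (Cd C f)) (Tar C (Idn C (Unt C)) f) = Cmp C f (Lu C (Dm C f)) \<and>
        Cmp C (Ru C (Cd C f)) (Tar C f (Idn C (Unt C))) = Cmp C f (Ru C (Dm C f))) \<and>
     (\<forall>W\<in>Ob C. \<forall>X\<in>Ob C. \<forall>Y\<in>Ob C. \<forall>Z\<in>Ob C.
        Cmp C (Asc C W X (Tob C Y Z)) (Asc C (Tob C W X) Y Z) =
        Cmp C (Tar C (Idn C W) (Asc C X Y Z))
          (Cmp C (Asc C W (Tob C X Y) Z) (Tar C (Asc C W X Y) (Idn C Z)))) \<and>
     (\<forall>X\<in>Ob C. \<forall>Y\<in>Ob C.
        Cmp C (Tar C (Idn C X) (Lu C Y)) (Asc C X (Unt C) Y) = Tar C (Ru C X) (Idn C Y))"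

definition strict_monoidal_category :: "('o,'m,'z) moncat_scheme \<Rightarrow> bool" where
  "strict_monoidal_category C \<longleftrightarrow> monoidal_category C \<and>
     (\<forall>X\<in>Ob C. \<forall>Y\<in>Ob C. \<forall>Z\<in>Ob C. Tob C (Tob C X Y) Z = Tob C X (Tob C Y Z) \<and>
        Asc C X Y Z = Idn C (Tob C X (Tob C Y Z))) \<and>
     (\<forall>X\<in>Ob C. Tob C (Unt C) X = X \<and> Tob C X (Unt C) = X \<and> Lu C X = Idn C X \<and> Ru C X = Idn C X) \<and>
     (\<forall>f\<in>Ar C. \<forall>g\<in>Ar C. \<forall>h\<in>Ar C. Tar C (Tar C f g) h = Tar C f (Tar C g h)) \<and>
     (\<forall>f\<in>Ar C. Tar C (Idn C (Unt C)) f = f \<and> Tar C f (Idn C (Unt C)) = f)"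

definition braided_monoidal_category :: "('o,'m,'z) bmoncat_scheme \<Rightarrow> bool" where
  "braided_monoidal_category C \<longleftrightarrow> monoidal_category C \<and>
     (\<forall>X\<in>Ob C. \<forall>Y\<in>Ob C. iso C (Brd C X Y) \<and> hom C (Brd C X Y) (Tob C X Y) (Tob C Y X)) \<and>
     (\<forall>f\<in>Ar C. \<forall>g\<in>Ar C.
        Cmp C (Brd C (Cd C f) (Cd C g)) (Tar C f g) = Cmp C (Tar C g f) (Brd C (Dm C f) (Dm C g))) \<and>
     (\<forall>X\<in>Ob C. \<forall>Y\<in>Ob C. \<forall>Z\<in>Ob C.
        Cmp C (Asc C Y Z X) (Cmp C (Brd C X (Tob C Y Z)) (Asc C X Y Z)) =
        Cmp C (Tar C (Idn C Y) (Brd C X Z)) (Cmp C (Asc C Y X Z) (Tar C (Brd C X Y) (Idn C Z)))) \<and>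
     (\<forall>X\<in>Ob C. \<forall>Y\<in>Ob C. \<forall>Z\<in>Ob C.
        Cmp C (cinv C (Asc C Z X Y)) (Cmp C (Brd C (Tob C X Y) Z) (cinv C (Asc C X Y Z))) =
        Cmp C (Tar C (Brd C X Z) (Idn C Y))
          (Cmp C (cinv C (Asc C X Z Y)) (Tar C (Idn C X) (Brd C Y Z))))"

definition strict_braided_monoidal_category :: "('o,'m,'z) bmoncat_scheme \<Rightarrow> bool" where
  "strict_braided_monoidal_category C \<longleftrightarrow>
     braided_monoidal_category C \<and> strict_monoidal_category C"

datatype ('ao,'am,'bo,'bm) ffun = FF
  (FO: "'ao \<Rightarrow> 'bo")
  (FM: "'am \<Rightarrow> 'bm")
  (Fr: "'ao \<Rightarrow> 'ao \<Rightarrow> 'bm")  (* r_{A,B} : FA \<otimes> FB \<rightarrow> F(A\<otimes>B) *)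
  (Fr0: "'bm")               (* r_0 : I \<rightarrow> FI *)
  (Fi: "'ao \<Rightarrow> 'ao \<Rightarrow> 'bm")  (* i_{A,B} : F(A\<otimes>B) \<rightarrow> FA \<otimes> FB *)
  (Fi0: "'bm")               (* i_0 : FI \<rightarrow> I *)

definition is_functor :: "('ao,'am,'z1) cat_scheme \<Rightarrow> ('bo,'bm,'z2) cat_scheme
    \<Rightarrow> ('ao \<Rightarrow> 'bo) \<Rightarrow> ('am \<Rightarrow> 'bm) \<Rightarrow> bool" where
  "is_functor A B Fo Fm \<longleftrightarrow>
     (\<forall>X\<in>Ob A. Fo X \<in> Ob B) \<and>
     (\<forall>f\<in>Ar A. hom B (Fm f) (Fo (Dm A f)) (Fo (Cd A f))) \<and>
     (\<forall>X\<in>Ob A. Fm (Idn A X) = Idn B (Fo X)) \<and>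
     (\<forall>f\<in>Ar A. \<forall>g\<in>Ar A. Cd A f = Dm A g \<longrightarrow> Fm (Cmp A g f) = Cmp B (Fm g) (Fm f))"

text \<open>Monoidal (lax) and comonoidal (oplax) functor axioms, written for strict monoidal
  source and target (so no associators/unitors appear).\<close>

definition monoidal_functor :: "('ao,'am,'z1) moncat_scheme \<Rightarrow> ('bo,'bm,'z2) moncat_scheme
    \<Rightarrow> ('ao,'am,'bo,'bm) ffun \<Rightarrow> bool" where
  "monoidal_functor A B F \<longleftrightarrow> is_functor A B (FO F) (FM F) \<and>
     (\<forall>X\<in>Ob A. \<forall>Y\<in>Ob A. hom B (Fr F X Y) (Tob B (FO F X) (FO F Y)) (FO F (Tob A X Y))) \<and>
     hom B (Fr0 F) (Unt B) (FO F (Unt A)) \<and>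
     (\<forall>f\<in>Ar A. \<forall>g\<in>Ar A.
        Cmp B (Fr F (Cd A f) (Cd A g)) (Tar B (FM F f) (FM F g)) =
        Cmp B (FM F (Tar A f g)) (Fr F (Dm A f) (Dm A g))) \<and>
     (\<forall>X\<in>Ob A. \<forall>Y\<in>Ob A. \<forall>Z\<in>Ob A.
        Cmp B (Fr F (Tob A X Y) Z) (Tar B (Fr F X Y) (Idn B (FO F Z))) =
        Cmp B (Fr F X (Tob A Y Z)) (Tar B (Idn B (FO F X)) (Fr F Y Z))) \<and>
     (\<forall>X\<in>Ob A. Cmp B (Fr F (Unt A) X) (Tar B (Fr0 F) (Idn B (FO F X))) = Idn B (FO F X) \<and>
        Cmp B (Fr F X (Unt A)) (Tar B (Idn B (FO F X)) (Fr0 F)) = Idn B (FO F X))"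

definition comonoidal_functor :: "('ao,'am,'z1) moncat_scheme \<Rightarrow> ('bo,'bm,'z2) moncat_scheme
    \<Rightarrow> ('ao,'am,'bo,'bm) ffun \<Rightarrow> bool" where
  "comonoidal_functor A B F \<longleftrightarrow> is_functor A B (FO F) (FM F) \<and>
     (\<forall>X\<in>Ob A. \<forall>Y\<in>Ob A. hom B (Fi F X Y) (FO F (Tob A X Y)) (Tob B (FO F X) (FO F Y))) \<and>
     hom B (Fi0 F) (FO F (Unt A)) (Unt B) \<and>
     (\<forall>f\<in>Ar A. \<forall>g\<in>Ar A.
        Cmp B (Tar B (FM F f) (FM F g)) (Fi F (Dm A f) (Dm A g)) =
        Cmp B (Fi F (Cd A f) (Cd A g)) (FM F (Tar A f g))) \<and>
     (\<forall>X\<in>Ob A. \<forall>Y\<in>Ob A. \<forall>Z\<in>Ob A.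
        Cmp B (Tar B (Fi F X Y) (Idn B (FO F Z))) (Fi F (Tob A X Y) Z) =
        Cmp B (Tar B (Idn B (FO F X)) (Fi F Y Z)) (Fi F X (Tob A Y Z))) \<and>
     (\<forall>X\<in>Ob A. Cmp B (Tar B (Fi0 F) (Idn B (FO F X))) (Fi F (Unt A) X) = Idn B (FO F X) \<and>
        Cmp B (Tar B (Idn B (FO F X)) (Fi0 F)) (Fi F X (Unt A)) = Idn B (FO F X))"

definition frobenius_monoidal_functor :: "('ao,'am,'z1) moncat_scheme \<Rightarrow> ('bo,'bm,'z2) moncat_scheme
    \<Rightarrow> ('ao,'am,'bo,'bm) ffun \<Rightarrow> bool" where
  "frobenius_monoidal_functor A B F \<longleftrightarrow> monoidal_functor A B F \<and> comonoidal_functor A B F \<and>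
     (\<forall>X\<in>Ob A. \<forall>Y\<in>Ob A. \<forall>Z\<in>Ob A.
        Cmp B (Fi F X (Tob A Y Z)) (Fr F (Tob A X Y) Z) =
        Cmp B (Tar B (Idn B (FO F X)) (Fr F Y Z)) (Tar B (Fi F X Y) (Idn B (FO F Z))) \<and>
        Cmp B (Fi F (Tob A X Y) Z) (Fr F X (Tob A Y Z)) =
        Cmp B (Tar B (Fr F X Y) (Idn B (FO F Z))) (Tar B (Idn B (FO F X)) (Fi F Y Z)))"

text \<open>Natural transformations F \<Rightarrow> G, with components extensional (undefined off objects).\<close>

definition nat_trans :: "('ao,'am,'z1) cat_scheme \<Rightarrow> ('bo,'bm,'z2) cat_scheme
    \<Rightarrow> ('ao,'am,'bo,'bm) ffun \<Rightarrow> ('ao,'am,'bo,'bm) ffun \<Rightarrow> ('ao \<Rightarrow> 'bm) \<Rightarrow> bool" where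
  "nat_trans A B F G \<eta> \<longleftrightarrow>
     (\<forall>X\<in>Ob A. hom B (\<eta> X) (FO F X) (FO G X)) \<and>
     (\<forall>X. X \<notin> Ob A \<longrightarrow> \<eta> X = undefined) \<and>
     (\<forall>f\<in>Ar A. Cmp B (FM G f) (\<eta> (Dm A f)) = Cmp B (\<eta> (Cd A f)) (FM F f))"

definition frob_tensor :: "('bo,'bm,'z) bmoncat_scheme
    \<Rightarrow> ('ao,'am,'bo,'bm) ffun \<Rightarrow> ('ao,'am,'bo,'bm) ffun \<Rightarrow> ('ao,'am,'bo,'bm) ffun" where
  "frob_tensor B F G = FF
     (\<lambda>X. Tob B (FO F X) (FO G X))
     (\<lambda>f. Tar B (FM F f) (FM G f))
     (\<lambda>X Y. Cmp B (Tar B (Fr F X Y) (Fr G X Y))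
        (Tar B (Tar B (Idn B (FO F X)) (cinv B (Brd B (FO F Y) (FO G X)))) (Idn B (FO G Y))))
     (Tar B (Fr0 F) (Fr0 G))
     (\<lambda>X Y. Cmp B (Tar B (Tar B (Idn B (FO F X)) (Brd B (FO F Y) (FO G X))) (Idn B (FO G Y)))
        (Tar B (Fi F X Y) (Fi G X Y)))
     (Tar B (Fi0 F) (Fi0 G))"

definition frob_unit :: "('bo,'bm,'z) bmoncat_scheme \<Rightarrow> ('ao,'am,'bo,'bm) ffun" where
  "frob_unit B = FF (\<lambda>_. Unt B) (\<lambda>_. Idn B (Unt B)) (\<lambda>_ _. Idn B (Unt B)) (Idn B (Unt B))
     (\<lambda>_ _. Idn B (Unt B)) (Idn B (Unt B))"

type_synonym ('ao,'am,'bo,'bm) frob_arr =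
  "('ao,'am,'bo,'bm) ffun \<times> ('ao,'am,'bo,'bm) ffun \<times> ('ao \<Rightarrow> 'bm)"

definition FrobCat :: "('ao,'am) moncat \<Rightarrow> ('bo,'bm) bmoncat
    \<Rightarrow> (('ao,'am,'bo,'bm) ffun, ('ao,'am,'bo,'bm) frob_arr) bmoncat" where
  "FrobCat A B =
    \<lparr> Ob = {F. frobenius_monoidal_functor A B F},
      Ar = {(F, G, \<eta>). frobenius_monoidal_functor A B F \<and> frobenius_monoidal_functor A B G \<and>
                       nat_trans A B F G \<eta>},
      Dm = (\<lambda>(F, G, \<eta>). F),
      Cd = (\<lambda>(F, G, \<eta>). G),
      Idn = (\<lambda>F. (F, F, \<lambda>X. if X \<in> Ob A then Idn B (FO F X) else undefined)),
      Cmp = (\<lambda>(G, H, \<theta>) (F, G', \<eta>). (F, H, \<lambda>X. if X \<in> Ob A then Cmp B (\<theta> X) (\<eta> X) else undefined)),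
      Tob = frob_tensor B,
      Tar = (\<lambda>(F, G, \<eta>) (F', G', \<eta>'). (frob_tensor B F F', frob_tensor B G G',
               \<lambda>X. if X \<in> Ob A then Tar B (\<eta> X) (\<eta>' X) else undefined)),
      Unt = frob_unit B,
      Asc = (\<lambda>F G H. (frob_tensor B (frob_tensor B F G) H, frob_tensor B F (frob_tensor B G H),
               \<lambda>X. if X \<in> Ob A then Idn B (Tob B (FO F X) (Tob B (FO G X) (FO H X))) else undefined)),
      Lu = (\<lambda>F. (frob_tensor B (frob_unit B) F, F,
               \<lambda>X. if X \<in> Ob A then Idn B (FO F X) else undefined)),
      Ru = (\<lambda>F. (frob_tensor B F (frob_unit B), F,
               \<lambda>X. if X \<in> Ob A then Idn B (FO F X) else undefined)),
      Brd = (\<lambda>F G. (frob_tensor B F G, frob_tensor B G F,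
               \<lambda>X. if X \<in> Ob A then Brd B (FO F X) (FO G X) else undefined)) \<rparr>"

end

theory Submission
  imports Defs
begin


section \<open>General category facts\<close>

lemma inverse_unique:
  assumes C: "category C" and f: "f \<in> Ar C" and g: "is_inverse C f g" and h: "is_inverse C f h"
  shows "g = h"
proof -
  have ax: "\<forall>f\<in>Ar C. \<forall>g\<in>Ar C. \<forall>h\<in>Ar C. Cd C f = Dm C g \<longrightarrow> Cd C g = Dm C h \<longrightarrow>
        Cmp C h (Cmp C g f) = Cmp C (Cmp C h g) f"
   and idl: "\<forall>f\<in>Ar C. Cmp C (Idn C (Cd C f)) f = f \<and> Cmp C f (Idn C (Dm C f)) = f"
    using C unfolding category_def by blast+
  from g have g1: "g \<in> Ar C" "Dm C g = Cd C f" "Cd C g = Dm C f" "Cmp C g f = Idn C (Dm C f)"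
    unfolding is_inverse_def by auto
  from h have h1: "h \<in> Ar C" "Dm C h = Cd C f" "Cd C h = Dm C f" "Cmp C f h = Idn C (Cd C f)"
    unfolding is_inverse_def by auto
  have "g = Cmp C g (Idn C (Dm C g))" using idl g1 by auto
  also have "\<dots> = Cmp C g (Cmp C f h)" using g1 h1 by simp
  also have "\<dots> = Cmp C (Cmp C g f) h" using ax[rule_format, of h f g] g1 h1 f by simp
  also have "\<dots> = Cmp C (Idn C (Cd C h)) h" using g1 h1 by simp
  also have "\<dots> = h" using idl h1 by auto
  finally show ?thesis .
qed

lemma cinv_eq:
  assumes "category C" "f \<in> Ar C" "is_inverse C f g"
  shows "cinv C f = g"
  unfolding cinv_def using inverse_unique[OF assms(1,2)] assms(3) by blast

lemma cinv_is_inverse: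
  assumes "category C" "iso C f"
  shows "is_inverse C f (cinv C f)"
proof -
  from assms(2) obtain g where "is_inverse C f g" "f \<in> Ar C" unfolding iso_def by blast
  thus ?thesis using cinv_eq[OF assms(1)] by simp
qed

section \<open>Strict braided monoidal category\<close>

locale SBM =
  fixes B :: "('o,'m) bmoncat"
  assumes sb: "strict_braided_monoidal_category B"
begin

abbreviation ar where "ar f \<equiv> f \<in> Ar B"
abbreviation ob where "ob X \<equiv> X \<in> Ob B"
abbreviation cmp (infixr "\<cdot>" 55) where "g \<cdot> f \<equiv> Cmp B g f"
abbreviation tar (infixr "\<otimes>" 70) where "f \<otimes> g \<equiv> Tar B f g"
abbreviation tob (infixr "\<odot>" 70) where "X \<odot> Y \<equiv> Tob B X Y"
abbreviation idn ("\<iota>") where "\<iota> X \<equiv> Idn B X"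
abbreviation dm where "dm f \<equiv> Dm B f"
abbreviation cd where "cd f \<equiv> Cd B f"
abbreviation brd ("\<sigma>") where "\<sigma> X Y \<equiv> Brd B X Y"
abbreviation brdi ("\<tau>") where "\<tau> X Y \<equiv> cinv B (Brd B X Y)"
abbreviation unt ("\<one>") where "\<one> \<equiv> Unt B"

lemma strict: "strict_monoidal_category B"
  using sb unfolding strict_braided_monoidal_category_def by (rule conjunct2)
lemma mon: "monoidal_category B"
  using strict unfolding strict_monoidal_category_def by (rule conjunct1)
lemma cat: "category B"
  using mon unfolding monoidal_category_def by (rule conjunct1)

lemmas catU = cat[unfolded category_def]
lemmas monU = mon[unfolded monoidal_category_def]
lemmas strU = strict[unfolded strict_monoidal_category_def]
lemmas brU = sb[unfolded strict_braided_monoidal_category_def braided_monoidal_category_def, THEN conjunct1]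
lemmas cat1 = catU[THEN conjunct1]
lemmas cat2 = catU[THEN conjunct2, THEN conjunct1]
lemmas cat3 = catU[THEN conjunct2, THEN conjunct2, THEN conjunct1]
lemmas cat4 = catU[THEN conjunct2, THEN conjunct2, THEN conjunct2, THEN conjunct1]
lemmas cat5 = catU[THEN conjunct2, THEN conjunct2, THEN conjunct2, THEN conjunct2]
lemmas mon1 = monU[THEN conjunct1]
lemmas mon2 = monU[THEN conjunct2, THEN conjunct1]
lemmas mon3 = monU[THEN conjunct2, THEN conjunct2, THEN conjunct1]
lemmas mon4 = monU[THEN conjunct2, THEN conjunct2, THEN conjunct2, THEN conjunct1]
lemmas mon5 = monU[THEN conjunct2, THEN conjunct2, THEN conjunct2, THEN conjunct2, THEN conjunct1]
lemmas mon6 = monU[THEN conjunct2, THEN conjunct2, THEN conjunct2, THEN conjunct2, THEN conjunct2, THEN conjunct1]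
lemmas mon7 = monU[THEN conjunct2, THEN conjunct2, THEN conjunct2, THEN conjunct2, THEN conjunct2, THEN conjunct2, THEN conjunct1]
lemmas mon8 = monU[THEN conjunct2, THEN conjunct2, THEN conjunct2, THEN conjunct2, THEN conjunct2, THEN conjunct2, THEN conjunct2, THEN conjunct1]
lemmas mon9 = monU[THEN conjunct2, THEN conjunct2, THEN conjunct2, THEN conjunct2, THEN conjunct2, THEN conjunct2, THEN conjunct2, THEN conjunct2, THEN conjunct1]
lemmas mon10 = monU[THEN conjunct2, THEN conjunct2, THEN conjunct2, THEN conjunct2, THEN conjunct2, THEN conjunct2, THEN conjunct2, THEN conjunct2, THEN conjunct2, THEN conjunct1]
lemmas mon11 = monU[THEN conjunct2, THEN conjunct2, THEN conjunct2, THEN conjunct2, THEN conjunct2, THEN conjunct2, THEN conjunct2, THEN conjunct2, THEN conjunct2, THEN conjunct2, THEN conjunct1]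
lemmas mon12 = monU[THEN conjunct2, THEN conjunct2, THEN conjunct2, THEN conjunct2, THEN conjunct2, THEN conjunct2, THEN conjunct2, THEN conjunct2, THEN conjunct2, THEN conjunct2, THEN conjunct2]
lemmas str1 = strU[THEN conjunct1]
lemmas str2 = strU[THEN conjunct2, THEN conjunct1]
lemmas str3 = strU[THEN conjunct2, THEN conjunct2, THEN conjunct1]
lemmas str4 = strU[THEN conjunct2, THEN conjunct2, THEN conjunct2, THEN conjunct1]
lemmas str5 = strU[THEN conjunct2, THEN conjunct2, THEN conjunct2, THEN conjunct2]
lemmas br1 = brU[THEN conjunct1]
lemmas br2 = brU[THEN conjunct2, THEN conjunct1]
lemmas br3 = brU[THEN conjunct2, THEN conjunct2, THEN conjunct1]
lemmas br4 = brU[THEN conjunct2, THEN conjunct2, THEN conjunct2, THEN conjunct1]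
lemmas br5 = brU[THEN conjunct2, THEN conjunct2, THEN conjunct2, THEN conjunct2]

lemma ob_Unt[simp]: "ob \<one>" using mon2 by blast
lemma ob_Tob[simp]: "ob X \<Longrightarrow> ob Y \<Longrightarrow> ob (X \<odot> Y)" using mon3 by blast
lemma ob_Dm[simp]: "ar f \<Longrightarrow> ob (dm f)" using cat1 by blast
lemma ob_Cd[simp]: "ar f \<Longrightarrow> ob (cd f)" using cat1 by blast
lemma ar_Idn[simp]: "ob X \<Longrightarrow> ar (\<iota> X)" using cat2 by blast
lemma Dm_Idn[simp]: "ob X \<Longrightarrow> dm (\<iota> X) = X" using cat2 by blast
lemma Cd_Idn[simp]: "ob X \<Longrightarrow> cd (\<iota> X) = X" using cat2 by blast
lemma ar_Cmp[simp]: "ar f \<Longrightarrow> ar g \<Longrightarrow> cd f = dm g \<Longrightarrow> ar (g \<cdot> f)"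
  using cat3 by blast
lemma Dm_Cmp[simp]: "ar f \<Longrightarrow> ar g \<Longrightarrow> cd f = dm g \<Longrightarrow> dm (g \<cdot> f) = dm f"
  using cat3 by blast
lemma Cd_Cmp[simp]: "ar f \<Longrightarrow> ar g \<Longrightarrow> cd f = dm g \<Longrightarrow> cd (g \<cdot> f) = cd g"
  using cat3 by blast
lemma ar_Tar[simp]: "ar f \<Longrightarrow> ar g \<Longrightarrow> ar (f \<otimes> g)"
  using mon4 unfolding hom_def by blast
lemma Dm_Tar[simp]: "ar f \<Longrightarrow> ar g \<Longrightarrow> dm (f \<otimes> g) = dm f \<odot> dm g"
  using mon4 unfolding hom_def by blast
lemma Cd_Tar[simp]: "ar f \<Longrightarrow> ar g \<Longrightarrow> cd (f \<otimes> g) = cd f \<odot> cd g"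
  using mon4 unfolding hom_def by blast
lemma Tob_assoc[simp]: "ob X \<Longrightarrow> ob Y \<Longrightarrow> ob Z \<Longrightarrow> (X \<odot> Y) \<odot> Z = X \<odot> (Y \<odot> Z)"
  using str2 by blast
lemma Tob_unit[simp]: "ob X \<Longrightarrow> \<one> \<odot> X = X" "ob X \<Longrightarrow> X \<odot> \<one> = X"
  using str3 by blast+

lemma comp_assoc: "ar f \<Longrightarrow> ar g \<Longrightarrow> ar h \<Longrightarrow> cd f = dm g \<Longrightarrow> cd g = dm h \<Longrightarrow>
   h \<cdot> (g \<cdot> f) = (h \<cdot> g) \<cdot> f"
  using cat5 by blast
lemma id_l[simp]: "ar f \<Longrightarrow> cd f = X \<Longrightarrow> \<iota> X \<cdot> f = f"
  using cat4 by blast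
lemma id_r[simp]: "ar f \<Longrightarrow> dm f = X \<Longrightarrow> f \<cdot> \<iota> X = f"
  using cat4 by blast
lemma Tar_Idn: "ob X \<Longrightarrow> ob Y \<Longrightarrow> \<iota> X \<otimes> \<iota> Y = \<iota> (X \<odot> Y)"
  using mon5 by blast
lemma interchange: "ar f \<Longrightarrow> ar g \<Longrightarrow> ar f' \<Longrightarrow> ar g' \<Longrightarrow> cd f = dm g \<Longrightarrow> cd f' = dm g' \<Longrightarrow>
   (g \<cdot> f) \<otimes> (g' \<cdot> f') = (g \<otimes> g') \<cdot> (f \<otimes> f')"
  using mon6 by blast
lemma Tar_assoc: "ar f \<Longrightarrow> ar g \<Longrightarrow> ar h \<Longrightarrow> (f \<otimes> g) \<otimes> h = f \<otimes> (g \<otimes> h)"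
  using str4 by blast
lemma Tar_unit: "ar f \<Longrightarrow> \<iota> \<one> \<otimes> f = f" "ar f \<Longrightarrow> f \<otimes> \<iota> \<one> = f"
  using str5 by blast+

lemma Asc_id: "ob X \<Longrightarrow> ob Y \<Longrightarrow> ob Z \<Longrightarrow> Asc B X Y Z = \<iota> (X \<odot> Y \<odot> Z)"
  using str2 by blast

lemma ar_Brd[simp]: "ob X \<Longrightarrow> ob Y \<Longrightarrow> ar (\<sigma> X Y)"
  and Dm_Brd[simp]: "ob X \<Longrightarrow> ob Y \<Longrightarrow> dm (\<sigma> X Y) = X \<odot> Y"
  and Cd_Brd[simp]: "ob X \<Longrightarrow> ob Y \<Longrightarrow> cd (\<sigma> X Y) = Y \<odot> X"
  using br2 unfolding hom_def by blast+

lemma iso_Brd: "ob X \<Longrightarrow> ob Y \<Longrightarrow> iso B (\<sigma> X Y)"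
  using br2 by blast

lemma brdi_inv: "ob X \<Longrightarrow> ob Y \<Longrightarrow> is_inverse B (\<sigma> X Y) (\<tau> X Y)"
  using cinv_is_inverse[OF cat iso_Brd] .

lemma ar_Brdi[simp]: "ob X \<Longrightarrow> ob Y \<Longrightarrow> ar (\<tau> X Y)"
  and Dm_Brdi[simp]: "ob X \<Longrightarrow> ob Y \<Longrightarrow> dm (\<tau> X Y) = Y \<odot> X"
  and Cd_Brdi[simp]: "ob X \<Longrightarrow> ob Y \<Longrightarrow> cd (\<tau> X Y) = X \<odot> Y"
  and brdi_brd: "ob X \<Longrightarrow> ob Y \<Longrightarrow> \<tau> X Y \<cdot> \<sigma> X Y = \<iota> (X \<odot> Y)"
  and brd_brdi: "ob X \<Longrightarrow> ob Y \<Longrightarrow> \<sigma> X Y \<cdot> \<tau> X Y = \<iota> (Y \<odot> X)"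
  using brdi_inv[of X Y] unfolding is_inverse_def by auto

lemma brd_nat: "ar f \<Longrightarrow> ar g \<Longrightarrow> \<sigma> (cd f) (cd g) \<cdot> (f \<otimes> g) = (g \<otimes> f) \<cdot> \<sigma> (dm f) (dm g)"
  using br3 by blast

lemma cinv_id: "ob X \<Longrightarrow> cinv B (\<iota> X) = \<iota> X"
  by (rule cinv_eq[OF cat]) (auto simp: is_inverse_def)

lemma hex1: "ob X \<Longrightarrow> ob Y \<Longrightarrow> ob Z \<Longrightarrow> \<sigma> X (Y \<odot> Z) = (\<iota> Y \<otimes> \<sigma> X Z) \<cdot> (\<sigma> X Y \<otimes> \<iota> Z)"
proof -
  assume o: "ob X" "ob Y" "ob Z"
  have "\<forall>X\<in>Ob B. \<forall>Y\<in>Ob B. \<forall>Z\<in>Ob B.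
        Cmp B (Asc B Y Z X) (Cmp B (Brd B X (Tob B Y Z)) (Asc B X Y Z)) =
        Cmp B (Tar B (Idn B Y) (Brd B X Z)) (Cmp B (Asc B Y X Z) (Tar B (Brd B X Y) (Idn B Z)))"
    by (rule br4)
  hence "Cmp B (Asc B Y Z X) (Cmp B (Brd B X (Tob B Y Z)) (Asc B X Y Z)) =
        Cmp B (Tar B (Idn B Y) (Brd B X Z)) (Cmp B (Asc B Y X Z) (Tar B (Brd B X Y) (Idn B Z)))"
    using o by blast
  thus ?thesis using o by (simp add: Asc_id)
qed

lemma hex2: "ob X \<Longrightarrow> ob Y \<Longrightarrow> ob Z \<Longrightarrow> \<sigma> (X \<odot> Y) Z = (\<sigma> X Z \<otimes> \<iota> Y) \<cdot> (\<iota> X \<otimes> \<sigma> Y Z)"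
proof -
  assume o: "ob X" "ob Y" "ob Z"
  have "\<forall>X\<in>Ob B. \<forall>Y\<in>Ob B. \<forall>Z\<in>Ob B.
        Cmp B (cinv B (Asc B Z X Y)) (Cmp B (Brd B (Tob B X Y) Z) (cinv B (Asc B X Y Z))) =
        Cmp B (Tar B (Brd B X Z) (Idn B Y))
          (Cmp B (cinv B (Asc B X Z Y)) (Tar B (Idn B X) (Brd B Y Z)))"
    by (rule br5)
  hence "Cmp B (cinv B (Asc B Z X Y)) (Cmp B (Brd B (Tob B X Y) Z) (cinv B (Asc B X Y Z))) =
        Cmp B (Tar B (Brd B X Z) (Idn B Y))
          (Cmp B (cinv B (Asc B X Z Y)) (Tar B (Idn B X) (Brd B Y Z)))"
    using o by blast
  thus ?thesis using o by (simp add: Asc_id cinv_id)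
qed


lemma comp_assoc_r: "ar f \<Longrightarrow> ar g \<Longrightarrow> ar h \<Longrightarrow> cd f = dm g \<Longrightarrow> cd g = dm h \<Longrightarrow>
   (h \<cdot> g) \<cdot> f = h \<cdot> (g \<cdot> f)"
  by (simp add: comp_assoc)

lemma ctx: "a \<cdot> b = c \<cdot> d \<Longrightarrow> ar a \<Longrightarrow> ar b \<Longrightarrow> ar c \<Longrightarrow> ar d \<Longrightarrow> ar e \<Longrightarrow>
  cd b = dm a \<Longrightarrow> cd d = dm c \<Longrightarrow> cd e = dm b \<Longrightarrow> cd e = dm d \<Longrightarrow>
  a \<cdot> (b \<cdot> e) = c \<cdot> (d \<cdot> e)"
  by (metis comp_assoc)

lemma ctx1: "a \<cdot> b = c \<Longrightarrow> ar a \<Longrightarrow> ar b \<Longrightarrow> ar e \<Longrightarrow>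
  cd b = dm a \<Longrightarrow> cd e = dm b \<Longrightarrow> a \<cdot> (b \<cdot> e) = c \<cdot> e"
  by (metis comp_assoc)

lemmas nf = comp_assoc_r Tar_assoc Tar_unit

lemma brdi_nat: "ar f \<Longrightarrow> ar g \<Longrightarrow> \<tau> (cd f) (cd g) \<cdot> (g \<otimes> f) = (f \<otimes> g) \<cdot> \<tau> (dm f) (dm g)"
proof -
  assume f: "ar f" and g: "ar g"
  have "\<tau> (cd f) (cd g) \<cdot> (g \<otimes> f) = \<tau> (cd f) (cd g) \<cdot> (g \<otimes> f) \<cdot> \<sigma> (dm f) (dm g) \<cdot> \<tau> (dm f) (dm g)"
    using f g by (simp add: brd_brdi)
  also have "\<dots> = \<tau> (cd f) (cd g) \<cdot> \<sigma> (cd f) (cd g) \<cdot> (f \<otimes> g) \<cdot> \<tau> (dm f) (dm g)"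
    using f g by (simp add: ctx[OF brd_nat[symmetric]])
  also have "\<dots> = (f \<otimes> g) \<cdot> \<tau> (dm f) (dm g)"
    using f g by (simp add: ctx1[OF brdi_brd])
  finally show ?thesis .
qed


definition isid where "isid g \<longleftrightarrow> ar g \<and> g = \<iota> (dm g)"

lemma isid_Idn[simp]: "ob X \<Longrightarrow> isid (\<iota> X)" by (simp add: isid_def)
lemma isid_Tar[simp]: "isid f \<Longrightarrow> isid g \<Longrightarrow> isid (f \<otimes> g)"
  unfolding isid_def by (metis Tar_Idn ar_Tar Dm_Tar ob_Dm)
lemma isid_ar: "isid g \<Longrightarrow> ar g" by (simp add: isid_def)
lemma isid_cd: "isid g \<Longrightarrow> cd g = dm g" by (metis isid_def Cd_Idn ob_Dm)

lemma Idn_split: "ob X \<Longrightarrow> ob Y \<Longrightarrow> \<iota> (X \<odot> Y) = \<iota> X \<otimes> \<iota> Y"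
  by (simp add: Tar_Idn)

lemma absorb_l: "isid g \<Longrightarrow> ar f \<Longrightarrow> cd f = dm g \<Longrightarrow> g \<cdot> f = f"
  by (metis isid_def id_l)
lemma absorb_r: "isid g \<Longrightarrow> ar f \<Longrightarrow> dm f = dm g \<Longrightarrow> f \<cdot> g = f"
  by (metis isid_def id_r)

lemma interchange_c: "ar f \<Longrightarrow> ar g \<Longrightarrow> ar f' \<Longrightarrow> ar g' \<Longrightarrow> ar e \<Longrightarrow> cd f = dm g \<Longrightarrow> cd f' = dm g' \<Longrightarrow>
   cd e = dm f \<odot> dm f' \<Longrightarrow>
   (g \<otimes> g') \<cdot> ((f \<otimes> f') \<cdot> e) = ((g \<cdot> f) \<otimes> (g' \<cdot> f')) \<cdot> e"
  by (simp add: interchange comp_assoc)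

lemmas bs = comp_assoc_r Tar_assoc Tar_unit Idn_split absorb_l absorb_r
  interchange[symmetric] interchange_c isid_ar isid_cd

end


context SBM begin

lemma brd_unit_r[simp]: "ob X \<Longrightarrow> \<sigma> X \<one> = \<iota> X"
proof -
  assume X: "ob X"
  have "\<sigma> X (\<one> \<odot> \<one>) = (\<iota> \<one> \<otimes> \<sigma> X \<one>) \<cdot> (\<sigma> X \<one> \<otimes> \<iota> \<one>)" using hex1[of X "\<one>" "\<one>"] X by simp
  hence e: "\<sigma> X \<one> = \<sigma> X \<one> \<cdot> \<sigma> X \<one>" using X by (simp add: Tar_unit)
  have "\<iota> X = \<tau> X \<one> \<cdot> \<sigma> X \<one>" using X by (simp add: brdi_brd)
  also have "\<dots> = \<tau> X \<one> \<cdot> (\<sigma> X \<one> \<cdot> \<sigma> X \<one>)" using e by simp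
  also have "\<dots> = \<sigma> X \<one>" using X by (simp add: ctx1[OF brdi_brd])
  finally show ?thesis by simp
qed

lemma brd_unit_l[simp]: "ob X \<Longrightarrow> \<sigma> \<one> X = \<iota> X"
proof -
  assume X: "ob X"
  have "\<sigma> (\<one> \<odot> \<one>) X = (\<sigma> \<one> X \<otimes> \<iota> \<one>) \<cdot> (\<iota> \<one> \<otimes> \<sigma> \<one> X)" using hex2[of "\<one>" "\<one>" X] X by simp
  hence e: "\<sigma> \<one> X = \<sigma> \<one> X \<cdot> \<sigma> \<one> X" using X by (simp add: Tar_unit)
  have "\<iota> X = \<tau> \<one> X \<cdot> \<sigma> \<one> X" using X by (simp add: brdi_brd)
  also have "\<dots> = \<tau> \<one> X \<cdot> (\<sigma> \<one> X \<cdot> \<sigma> \<one> X)" using e by simp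
  also have "\<dots> = \<sigma> \<one> X" using X by (simp add: ctx1[OF brdi_brd])
  finally show ?thesis by simp
qed

lemma brdi_unit[simp]: "ob X \<Longrightarrow> \<tau> X \<one> = \<iota> X" "ob X \<Longrightarrow> \<tau> \<one> X = \<iota> X"
  by (simp_all add: cinv_id)

lemma brd_inv_simps[simp]:
  "ob X \<Longrightarrow> ob Y \<Longrightarrow> \<tau> X Y \<cdot> \<sigma> X Y = \<iota> X \<otimes> \<iota> Y"
  "ob X \<Longrightarrow> ob Y \<Longrightarrow> \<sigma> X Y \<cdot> \<tau> X Y = \<iota> Y \<otimes> \<iota> X"
  by (simp_all add: brdi_brd brd_brdi Tar_Idn)

lemma brd_inv_c[simp]:
  "ob X \<Longrightarrow> ob Y \<Longrightarrow> ar e \<Longrightarrow> cd e = X \<odot> Y \<Longrightarrow> \<tau> X Y \<cdot> (\<sigma> X Y \<cdot> e) = e"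
  "ob X \<Longrightarrow> ob Y \<Longrightarrow> ar e \<Longrightarrow> cd e = Y \<odot> X \<Longrightarrow> \<sigma> X Y \<cdot> (\<tau> X Y \<cdot> e) = e"
  by (simp_all add: ctx1[OF brdi_brd] ctx1[OF brd_brdi])

lemma hexi1: "ob X \<Longrightarrow> ob Y \<Longrightarrow> ob Z \<Longrightarrow> \<tau> X (Y \<odot> Z) = (\<tau> X Y \<otimes> \<iota> Z) \<cdot> (\<iota> Y \<otimes> \<tau> X Z)"
  apply (rule cinv_eq[OF cat])
   apply simp
  apply (simp add: is_inverse_def hex1 bs)
  done


lemma hexi2: "ob X \<Longrightarrow> ob Y \<Longrightarrow> ob Z \<Longrightarrow> \<tau> (X \<odot> Y) Z = (\<iota> X \<otimes> \<tau> Y Z) \<cdot> (\<tau> X Z \<otimes> \<iota> Y)"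
  apply (rule cinv_eq[OF cat])
   apply simp
  apply (simp add: is_inverse_def hex2 bs)
  done

lemma Tar_Idn_c: "ob X \<Longrightarrow> ob Y \<Longrightarrow> ar g \<Longrightarrow> \<iota> X \<otimes> (\<iota> Y \<otimes> g) = \<iota> (X \<odot> Y) \<otimes> g"
  by (simp add: Tar_assoc[symmetric] Tar_Idn)

lemma split_l: "ob X \<Longrightarrow> ar f \<Longrightarrow> ar g \<Longrightarrow> cd f = dm g \<Longrightarrow> \<iota> X \<otimes> (g \<cdot> f) = (\<iota> X \<otimes> g) \<cdot> (\<iota> X \<otimes> f)"
  by (metis interchange id_l ar_Idn Cd_Idn Dm_Idn)
lemma split_r: "ob X \<Longrightarrow> ar f \<Longrightarrow> ar g \<Longrightarrow> cd f = dm g \<Longrightarrow> (g \<cdot> f) \<otimes> \<iota> X = (g \<otimes> \<iota> X) \<cdot> (f \<otimes> \<iota> X)"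
  by (metis interchange id_l ar_Idn Cd_Idn Dm_Idn)

lemma swap: "ar f \<Longrightarrow> ar g \<Longrightarrow> (\<iota> (cd f) \<otimes> g) \<cdot> (f \<otimes> \<iota> (dm g)) = (f \<otimes> \<iota> (cd g)) \<cdot> (\<iota> (dm f) \<otimes> g)"
  by (metis interchange id_l id_r ar_Idn Cd_Idn Dm_Idn ob_Dm ob_Cd)

lemma swap': "ar f \<Longrightarrow> ar g \<Longrightarrow> cd f = X \<Longrightarrow> dm g = Y \<Longrightarrow>
  (\<iota> X \<otimes> g) \<cdot> (f \<otimes> \<iota> Y) = (f \<otimes> \<iota> (cd g)) \<cdot> (\<iota> (dm f) \<otimes> g)"
  using swap by blast

lemma swap_c: "ar f \<Longrightarrow> ar g \<Longrightarrow> ar e \<Longrightarrow> cd f = X \<Longrightarrow> dm g = Y \<Longrightarrow> cd e = dm f \<odot> Y \<Longrightarrow>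
  (\<iota> X \<otimes> g) \<cdot> ((f \<otimes> \<iota> Y) \<cdot> e) = (f \<otimes> \<iota> (cd g)) \<cdot> ((\<iota> (dm f) \<otimes> g) \<cdot> e)"
  by (subst ctx[OF swap'[of f g X Y]]) auto

lemmas ls = comp_assoc_r Tar_assoc Tar_unit Tar_Idn Tar_Idn_c split_l split_r swap' swap_c
  hexi1 hexi2

lemma coreM: "ob b \<Longrightarrow> ob z \<Longrightarrow> ob p \<Longrightarrow> ob q \<Longrightarrow>
  (\<iota> b \<otimes> \<tau> z (p \<odot> q)) \<cdot> (\<tau> b p \<otimes> \<iota> (q \<odot> z)) = (\<tau> (b \<odot> z) p \<otimes> \<iota> q) \<cdot> (\<iota> (p \<odot> b) \<otimes> \<tau> z q)"
  by (simp add: ls)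


lemma wc0: "ar x \<Longrightarrow> ar y \<Longrightarrow> cd y = dm x \<Longrightarrow> x \<cdot> y = \<iota> (dm y) \<Longrightarrow> ob X \<Longrightarrow> ob Y \<Longrightarrow>
   (\<iota> X \<otimes> x \<otimes> \<iota> Y) \<cdot> (\<iota> X \<otimes> y \<otimes> \<iota> Y) = \<iota> X \<otimes> \<iota> (dm y) \<otimes> \<iota> Y"
  by (simp add: interchange[symmetric])
lemma wc1: "ar x \<Longrightarrow> ar y \<Longrightarrow> cd y = dm x \<Longrightarrow> x \<cdot> y = \<iota> (dm y) \<Longrightarrow> ob X \<Longrightarrow> ob Y \<Longrightarrow>
   ar e \<Longrightarrow> cd e = X \<odot> dm y \<odot> Y \<Longrightarrow>
   (\<iota> X \<otimes> x \<otimes> \<iota> Y) \<cdot> ((\<iota> X \<otimes> y \<otimes> \<iota> Y) \<cdot> e) = e"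
  by (simp add: ctx1[OF wc0] Tar_Idn)
lemma wc2: "ar x \<Longrightarrow> ar y \<Longrightarrow> cd y = dm x \<Longrightarrow> x \<cdot> y = \<iota> (dm y) \<Longrightarrow> ob X \<Longrightarrow>
   ar e \<Longrightarrow> cd e = X \<odot> dm y \<Longrightarrow>
   (\<iota> X \<otimes> x) \<cdot> ((\<iota> X \<otimes> y) \<cdot> e) = e"
  using wc1[of x y X "\<one>" e] by (simp add: Tar_unit)
lemma wc3: "ar x \<Longrightarrow> ar y \<Longrightarrow> cd y = dm x \<Longrightarrow> x \<cdot> y = \<iota> (dm y) \<Longrightarrow> ob Y \<Longrightarrow>
   ar e \<Longrightarrow> cd e = dm y \<odot> Y \<Longrightarrow>
   (x \<otimes> \<iota> Y) \<cdot> ((y \<otimes> \<iota> Y) \<cdot> e) = e"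
  using wc1[of x y "\<one>" Y e] by (simp add: Tar_unit)
lemma wc1': "ar x \<Longrightarrow> ar y \<Longrightarrow> cd y = dm x \<Longrightarrow> x \<cdot> y = \<iota> (dm y) \<Longrightarrow> ob X \<Longrightarrow> ob Y \<Longrightarrow>
   (\<iota> X \<otimes> x \<otimes> \<iota> Y) \<cdot> (\<iota> X \<otimes> y \<otimes> \<iota> Y) = \<iota> (X \<odot> dm y \<odot> Y)"
  by (simp add: wc0 Tar_Idn)
lemma wc2': "ar x \<Longrightarrow> ar y \<Longrightarrow> cd y = dm x \<Longrightarrow> x \<cdot> y = \<iota> (dm y) \<Longrightarrow> ob X \<Longrightarrow>
   (\<iota> X \<otimes> x) \<cdot> (\<iota> X \<otimes> y) = \<iota> (X \<odot> dm y)"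
  using wc1'[of x y X "\<one>"] by (simp add: Tar_unit)
lemma wc3': "ar x \<Longrightarrow> ar y \<Longrightarrow> cd y = dm x \<Longrightarrow> x \<cdot> y = \<iota> (dm y) \<Longrightarrow> ob Y \<Longrightarrow>
   (x \<otimes> \<iota> Y) \<cdot> (y \<otimes> \<iota> Y) = \<iota> (dm y \<odot> Y)"
  using wc1'[of x y "\<one>" Y] by (simp add: Tar_unit)

lemmas ls0 = wc1 wc2 wc3 wc1' wc2' wc3' brdi_brd brd_brdi  comp_assoc_r Tar_assoc Tar_unit Tar_Idn Tar_Idn_c split_l split_r swap' swap_c

lemma coreC: "ob b \<Longrightarrow> ob z \<Longrightarrow> ob p \<Longrightarrow> ob q \<Longrightarrow>
  (\<sigma> b p \<otimes> \<iota> (q \<odot> z)) \<cdot> (\<iota> b \<otimes> \<sigma> z (p \<odot> q)) = (\<iota> (p \<odot> b) \<otimes> \<sigma> z q) \<cdot> (\<sigma> (b \<odot> z) p \<otimes> \<iota> q)"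
  by (simp add: ls0 hex1 hex2)

lemma coreF1: "ob b \<Longrightarrow> ob z \<Longrightarrow> ob p \<Longrightarrow> ob q \<Longrightarrow>
  (\<sigma> (b \<odot> z) p \<otimes> \<iota> q) \<cdot> (\<iota> b \<otimes> \<tau> z (p \<odot> q)) = (\<iota> (p \<odot> b) \<otimes> \<tau> z q) \<cdot> (\<sigma> b p \<otimes> \<iota> (q \<odot> z))"
  by (simp add: ls0 hex2 hexi1)

lemma coreF2: "ob b \<Longrightarrow> ob z \<Longrightarrow> ob p \<Longrightarrow> ob q \<Longrightarrow>
  (\<iota> b \<otimes> \<sigma> z (p \<odot> q)) \<cdot> (\<tau> (b \<odot> z) p \<otimes> \<iota> q) = (\<tau> b p \<otimes> \<iota> (q \<odot> z)) \<cdot> (\<iota> (p \<odot> b) \<otimes> \<sigma> z q)"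
  by (simp add: ls0 hex1 hexi2)


abbreviation Bt where "Bt a b p q \<equiv> (\<iota> a \<otimes> \<tau> b p) \<otimes> \<iota> q"
abbreviation Bs where "Bs a b p q \<equiv> (\<iota> a \<otimes> \<sigma> b p) \<otimes> \<iota> q"

lemmas ws = comp_assoc_r Tar_assoc Tar_unit Tar_Idn Tar_Idn_c split_l split_r

lemma whisk: "x = y \<Longrightarrow> \<iota> a \<otimes> x \<otimes> \<iota> w = \<iota> a \<otimes> y \<otimes> \<iota> w" by simp

lemma BR_M: "ob a \<Longrightarrow> ob b \<Longrightarrow> ob z \<Longrightarrow> ob p \<Longrightarrow> ob q \<Longrightarrow> ob w \<Longrightarrow>
  Bt (a \<odot> b) z (p \<odot> q) w \<cdot> (Bt a b p q \<otimes> \<iota> (z \<odot> w)) = Bt a (b \<odot> z) p (q \<odot> w) \<cdot> (\<iota> (a \<odot> p) \<otimes> Bt b z q w)"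
  using whisk[OF coreM[of b z p q], of a w] by (simp add: ws)

lemma BR_C: "ob a \<Longrightarrow> ob b \<Longrightarrow> ob z \<Longrightarrow> ob p \<Longrightarrow> ob q \<Longrightarrow> ob w \<Longrightarrow>
  (Bs a b p q \<otimes> \<iota> (z \<odot> w)) \<cdot> Bs (a \<odot> b) z (p \<odot> q) w = (\<iota> (a \<odot> p) \<otimes> Bs b z q w) \<cdot> Bs a (b \<odot> z) p (q \<odot> w)"
  using whisk[OF coreC[of b z p q], of a w] by (simp add: ws)

lemma BR_F1: "ob a \<Longrightarrow> ob b \<Longrightarrow> ob z \<Longrightarrow> ob p \<Longrightarrow> ob q \<Longrightarrow> ob w \<Longrightarrow>
  Bs a (b \<odot> z) p (q \<odot> w) \<cdot> Bt (a \<odot> b) z (p \<odot> q) w = (\<iota> (a \<odot> p) \<otimes> Bt b z q w) \<cdot> (Bs a b p q \<otimes> \<iota> (z \<odot> w))"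
  using whisk[OF coreF1[of b z p q], of a w] by (simp add: ws)

lemma BR_F2: "ob a \<Longrightarrow> ob b \<Longrightarrow> ob z \<Longrightarrow> ob p \<Longrightarrow> ob q \<Longrightarrow> ob w \<Longrightarrow>
  Bs (a \<odot> b) z (p \<odot> q) w \<cdot> Bt a (b \<odot> z) p (q \<odot> w) = (Bt a b p q \<otimes> \<iota> (z \<odot> w)) \<cdot> (\<iota> (a \<odot> p) \<otimes> Bs b z q w)"
  using whisk[OF coreF2[of b z p q], of a w] by (simp add: ws)


lemma merge2: "ar f1 \<Longrightarrow> ar f2 \<Longrightarrow> ar f3 \<Longrightarrow> ar g1 \<Longrightarrow> ar g2 \<Longrightarrow>
  cd f1 \<odot> cd f2 = dm g1 \<Longrightarrow> cd f3 = dm g2 \<Longrightarrow>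
  (g1 \<otimes> g2) \<cdot> (f1 \<otimes> (f2 \<otimes> f3)) = (g1 \<cdot> (f1 \<otimes> f2)) \<otimes> (g2 \<cdot> f3)"
  by (simp add: interchange Tar_assoc[symmetric])
lemma merge2': "ar f1 \<Longrightarrow> ar f2 \<Longrightarrow> ar g1 \<Longrightarrow> ar g2 \<Longrightarrow> ar g3 \<Longrightarrow>
  dm g1 \<odot> dm g2 = cd f1 \<Longrightarrow> dm g3 = cd f2 \<Longrightarrow>
  (g1 \<otimes> (g2 \<otimes> g3)) \<cdot> (f1 \<otimes> f2) = ((g1 \<otimes> g2) \<cdot> f1) \<otimes> (g3 \<cdot> f2)"
  by (simp add: interchange Tar_assoc[symmetric])

lemma brdi_nat': "ar f \<Longrightarrow> ar g \<Longrightarrow> cd f = X \<Longrightarrow> cd g = Y \<Longrightarrow>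
   \<tau> X Y \<cdot> (g \<otimes> f) = (f \<otimes> g) \<cdot> \<tau> (dm f) (dm g)"
  using brdi_nat by blast
lemma brd_nat': "ar f \<Longrightarrow> ar g \<Longrightarrow> dm f = X \<Longrightarrow> dm g = Y \<Longrightarrow>
   (g \<otimes> f) \<cdot> \<sigma> X Y = \<sigma> (cd f) (cd g) \<cdot> (f \<otimes> g)"
  using brd_nat by metis

lemma NAT_t: "ar f1 \<Longrightarrow> ar f2 \<Longrightarrow> ar g1 \<Longrightarrow> ar g2 \<Longrightarrow>
  Bt (cd f1) (cd f2) (cd g1) (cd g2) \<cdot> ((f1 \<otimes> g1) \<otimes> (f2 \<otimes> g2)) =
  ((f1 \<otimes> f2) \<otimes> (g1 \<otimes> g2)) \<cdot> Bt (dm f1) (dm f2) (dm g1) (dm g2)"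
  by (simp add: Tar_assoc interchange[symmetric] merge2 merge2' brdi_nat')

lemma NAT_s: "ar f1 \<Longrightarrow> ar f2 \<Longrightarrow> ar g1 \<Longrightarrow> ar g2 \<Longrightarrow>
  ((f1 \<otimes> g1) \<otimes> (f2 \<otimes> g2)) \<cdot> Bs (dm f1) (dm f2) (dm g1) (dm g2) =
  Bs (cd f1) (cd f2) (cd g1) (cd g2) \<cdot> ((f1 \<otimes> f2) \<otimes> (g1 \<otimes> g2))"
  by (simp add: Tar_assoc interchange[symmetric] merge2 merge2' brd_nat')

end


context SBM begin

lemma homD: "hom B f X Y \<Longrightarrow> ar f" "hom B f X Y \<Longrightarrow> dm f = X" "hom B f X Y \<Longrightarrow> cd f = Y"
  by (simp_all add: hom_def)
lemma homO: "hom B f X Y \<Longrightarrow> ob X" "hom B f X Y \<Longrightarrow> ob Y"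
  by (auto simp: hom_def dest: ob_Dm ob_Cd)

lemma L_rnat:
  assumes h: "hom B f1 a a'" "hom B f2 b b'" "hom B g1 p p'" "hom B g2 q q'"
  "hom B rF (a \<odot> b) u" "hom B rF' (a' \<odot> b') u'" "hom B rG (p \<odot> q) v" "hom B rG' (p' \<odot> q') v'"
  "hom B hF u u'" "hom B hG v v'"
  and eF: "rF' \<cdot> (f1 \<otimes> f2) = hF \<cdot> rF" and eG: "rG' \<cdot> (g1 \<otimes> g2) = hG \<cdot> rG"
  shows "((rF' \<otimes> rG') \<cdot> Bt a' b' p' q') \<cdot> ((f1 \<otimes> g1) \<otimes> (f2 \<otimes> g2)) = (hF \<otimes> hG) \<cdot> ((rF \<otimes> rG) \<cdot> Bt a b p q)"
proof -
  note T = h[THEN homD(1)] h[THEN homD(2)] h[THEN homD(3)] h[THEN homO(1)] h[THEN homO(2)]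
  have n: "Bt a' b' p' q' \<cdot> ((f1 \<otimes> g1) \<otimes> (f2 \<otimes> g2)) = ((f1 \<otimes> f2) \<otimes> (g1 \<otimes> g2)) \<cdot> Bt a b p q"
    using NAT_t[of f1 f2 g1 g2] T by simp
  have "((rF' \<otimes> rG') \<cdot> Bt a' b' p' q') \<cdot> ((f1 \<otimes> g1) \<otimes> (f2 \<otimes> g2)) = (rF' \<otimes> rG') \<cdot> (Bt a' b' p' q' \<cdot> ((f1 \<otimes> g1) \<otimes> (f2 \<otimes> g2)))"
    using T by (simp add: comp_assoc_r)
  also have "\<dots> = (rF' \<otimes> rG') \<cdot> (((f1 \<otimes> f2) \<otimes> (g1 \<otimes> g2)) \<cdot> Bt a b p q)" using n by simp
  also have "\<dots> = ((rF' \<cdot> (f1 \<otimes> f2)) \<otimes> (rG' \<cdot> (g1 \<otimes> g2))) \<cdot> Bt a b p q" using T by (simp add: interchange_c)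
  also have "\<dots> = ((hF \<cdot> rF) \<otimes> (hG \<cdot> rG)) \<cdot> Bt a b p q" using eF eG by simp
  also have "\<dots> = (hF \<otimes> hG) \<cdot> ((rF \<otimes> rG) \<cdot> Bt a b p q)" using T by (simp add: interchange_c)
  finally show ?thesis .
qed

lemma L_rassoc:
  assumes h: "ob a" "ob b" "ob z" "ob p" "ob q" "ob w"
  "hom B rF1 (a \<odot> b) s" "hom B rF2 (s \<odot> z) u" "hom B rF3 (b \<odot> z) s2" "hom B rF4 (a \<odot> s2) u"
  "hom B rG1 (p \<odot> q) t" "hom B rG2 (t \<odot> w) v" "hom B rG3 (q \<odot> w) t2" "hom B rG4 (p \<odot> t2) v"
  and eF: "rF2 \<cdot> (rF1 \<otimes> \<iota> z) = rF4 \<cdot> (\<iota> a \<otimes> rF3)" and eG: "rG2 \<cdot> (rG1 \<otimes> \<iota> w) = rG4 \<cdot> (\<iota> p \<otimes> rG3)"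
  shows "((rF2 \<otimes> rG2) \<cdot> Bt s z t w) \<cdot> (((rF1 \<otimes> rG1) \<cdot> Bt a b p q) \<otimes> \<iota> (z \<odot> w)) =
         ((rF4 \<otimes> rG4) \<cdot> Bt a s2 p t2) \<cdot> (\<iota> (a \<odot> p) \<otimes> ((rF3 \<otimes> rG3) \<cdot> Bt b z q w))"
proof -
  note T = h(1-6) h(7-)[THEN homD(1)] h(7-)[THEN homD(2)] h(7-)[THEN homD(3)] h(7-)[THEN homO(1)] h(7-)[THEN homO(2)]
  have n1: "Bt s z t w \<cdot> ((rF1 \<otimes> rG1) \<otimes> \<iota> (z \<odot> w)) = ((rF1 \<otimes> \<iota> z) \<otimes> (rG1 \<otimes> \<iota> w)) \<cdot> Bt (a \<odot> b) z (p \<odot> q) w"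
    using NAT_t[of rF1 "\<iota> z" rG1 "\<iota> w"] T by (simp add: Tar_Idn)
  have n2: "Bt a s2 p t2 \<cdot> (\<iota> (a \<odot> p) \<otimes> (rF3 \<otimes> rG3)) = ((\<iota> a \<otimes> rF3) \<otimes> (\<iota> p \<otimes> rG3)) \<cdot> Bt a (b \<odot> z) p (q \<odot> w)"
    using NAT_t[of "\<iota> a" rF3 "\<iota> p" rG3] T by (simp add: Tar_Idn)
  have br: "Bt (a \<odot> b) z (p \<odot> q) w \<cdot> (Bt a b p q \<otimes> \<iota> (z \<odot> w)) = Bt a (b \<odot> z) p (q \<odot> w) \<cdot> (\<iota> (a \<odot> p) \<otimes> Bt b z q w)"
    using T by (intro BR_M) auto
  have "((rF2 \<otimes> rG2) \<cdot> Bt s z t w) \<cdot> (((rF1 \<otimes> rG1) \<cdot> Bt a b p q) \<otimes> \<iota> (z \<odot> w)) =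
     (rF2 \<otimes> rG2) \<cdot> (Bt s z t w \<cdot> (((rF1 \<otimes> rG1) \<otimes> \<iota> (z \<odot> w)) \<cdot> (Bt a b p q \<otimes> \<iota> (z \<odot> w))))"
    using T by (simp add: split_r comp_assoc_r)
  also have "\<dots> = (rF2 \<otimes> rG2) \<cdot> (((rF1 \<otimes> \<iota> z) \<otimes> (rG1 \<otimes> \<iota> w)) \<cdot> (Bt (a \<odot> b) z (p \<odot> q) w \<cdot> (Bt a b p q \<otimes> \<iota> (z \<odot> w))))"
    using T by (simp add: ctx[OF n1])
  also have "\<dots> = ((rF2 \<cdot> (rF1 \<otimes> \<iota> z)) \<otimes> (rG2 \<cdot> (rG1 \<otimes> \<iota> w))) \<cdot> (Bt (a \<odot> b) z (p \<odot> q) w \<cdot> (Bt a b p q \<otimes> \<iota> (z \<odot> w)))"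
    using T by (intro interchange_c) simp_all
  also have "\<dots> = ((rF4 \<cdot> (\<iota> a \<otimes> rF3)) \<otimes> (rG4 \<cdot> (\<iota> p \<otimes> rG3))) \<cdot> (Bt a (b \<odot> z) p (q \<odot> w) \<cdot> (\<iota> (a \<odot> p) \<otimes> Bt b z q w))"
    using eF eG br by simp
  also have "\<dots> = (rF4 \<otimes> rG4) \<cdot> (((\<iota> a \<otimes> rF3) \<otimes> (\<iota> p \<otimes> rG3)) \<cdot> (Bt a (b \<odot> z) p (q \<odot> w) \<cdot> (\<iota> (a \<odot> p) \<otimes> Bt b z q w)))"
    using T by (intro interchange_c[symmetric]) simp_all
  also have "\<dots> = (rF4 \<otimes> rG4) \<cdot> (Bt a s2 p t2 \<cdot> ((\<iota> (a \<odot> p) \<otimes> (rF3 \<otimes> rG3)) \<cdot> (\<iota> (a \<odot> p) \<otimes> Bt b z q w)))"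
    using T by (simp add: ctx[OF n2[symmetric]])
  also have "\<dots> = ((rF4 \<otimes> rG4) \<cdot> Bt a s2 p t2) \<cdot> (\<iota> (a \<odot> p) \<otimes> ((rF3 \<otimes> rG3) \<cdot> Bt b z q w))"
    using T by (simp add: split_l comp_assoc_r)
  finally show ?thesis .
qed


lemma L_runit_l:
  assumes h: "ob x" "ob y" "hom B r0F \<one> e" "hom B r0G \<one> e'" "hom B rF (e \<odot> x) x" "hom B rG (e' \<odot> y) y"
  and eF: "rF \<cdot> (r0F \<otimes> \<iota> x) = \<iota> x" and eG: "rG \<cdot> (r0G \<otimes> \<iota> y) = \<iota> y"
  shows "((rF \<otimes> rG) \<cdot> Bt e x e' y) \<cdot> ((r0F \<otimes> r0G) \<otimes> \<iota> (x \<odot> y)) = \<iota> (x \<odot> y)"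
proof -
  note T = h(1-2) h(3-)[THEN homD(1)] h(3-)[THEN homD(2)] h(3-)[THEN homD(3)] h(3-)[THEN homO(1)] h(3-)[THEN homO(2)]
  have n: "Bt e x e' y \<cdot> ((r0F \<otimes> r0G) \<otimes> \<iota> (x \<odot> y)) = ((r0F \<otimes> \<iota> x) \<otimes> (r0G \<otimes> \<iota> y))"
    using NAT_t[of r0F "\<iota> x" r0G "\<iota> y"] T by (simp add: Tar_Idn Tar_unit cinv_id)
  have "((rF \<otimes> rG) \<cdot> Bt e x e' y) \<cdot> ((r0F \<otimes> r0G) \<otimes> \<iota> (x \<odot> y)) = (rF \<otimes> rG) \<cdot> (Bt e x e' y \<cdot> ((r0F \<otimes> r0G) \<otimes> \<iota> (x \<odot> y)))"
    using T by (simp add: comp_assoc_r)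
  also have "\<dots> = (rF \<cdot> (r0F \<otimes> \<iota> x)) \<otimes> (rG \<cdot> (r0G \<otimes> \<iota> y))"
    using T n by (simp add: interchange)
  also have "\<dots> = \<iota> (x \<odot> y)" using eF eG T by (simp add: Tar_Idn)
  finally show ?thesis .
qed

lemma L_runit_r:
  assumes h: "ob x" "ob y" "hom B r0F \<one> e" "hom B r0G \<one> e'" "hom B rF (x \<odot> e) x" "hom B rG (y \<odot> e') y"
  and eF: "rF \<cdot> (\<iota> x \<otimes> r0F) = \<iota> x" and eG: "rG \<cdot> (\<iota> y \<otimes> r0G) = \<iota> y"
  shows "((rF \<otimes> rG) \<cdot> Bt x e y e') \<cdot> (\<iota> (x \<odot> y) \<otimes> (r0F \<otimes> r0G)) = \<iota> (x \<odot> y)"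
proof -
  note T = h(1-2) h(3-)[THEN homD(1)] h(3-)[THEN homD(2)] h(3-)[THEN homD(3)] h(3-)[THEN homO(1)] h(3-)[THEN homO(2)]
  have n: "Bt x e y e' \<cdot> (\<iota> (x \<odot> y) \<otimes> (r0F \<otimes> r0G)) = ((\<iota> x \<otimes> r0F) \<otimes> (\<iota> y \<otimes> r0G))"
    using NAT_t[of "\<iota> x" r0F "\<iota> y" r0G] T by (simp add: Tar_Idn Tar_unit cinv_id)
  have "((rF \<otimes> rG) \<cdot> Bt x e y e') \<cdot> (\<iota> (x \<odot> y) \<otimes> (r0F \<otimes> r0G)) = (rF \<otimes> rG) \<cdot> (Bt x e y e' \<cdot> (\<iota> (x \<odot> y) \<otimes> (r0F \<otimes> r0G)))"
    using T by (simp add: comp_assoc_r)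
  also have "\<dots> = (rF \<cdot> (\<iota> x \<otimes> r0F)) \<otimes> (rG \<cdot> (\<iota> y \<otimes> r0G))"
    using T n by (simp add: interchange)
  also have "\<dots> = \<iota> (x \<odot> y)" using eF eG T by (simp add: Tar_Idn)
  finally show ?thesis .
qed

lemma L_inat:
  assumes h: "hom B f1 a a'" "hom B f2 b b'" "hom B g1 p p'" "hom B g2 q q'"
  "hom B iF u (a \<odot> b)" "hom B iF' u' (a' \<odot> b')" "hom B iG v (p \<odot> q)" "hom B iG' v' (p' \<odot> q')"
  "hom B hF u u'" "hom B hG v v'"
  and eF: "(f1 \<otimes> f2) \<cdot> iF = iF' \<cdot> hF" and eG: "(g1 \<otimes> g2) \<cdot> iG = iG' \<cdot> hG"
  shows "((f1 \<otimes> g1) \<otimes> (f2 \<otimes> g2)) \<cdot> (Bs a b p q \<cdot> (iF \<otimes> iG)) = (Bs a' b' p' q' \<cdot> (iF' \<otimes> iG')) \<cdot> (hF \<otimes> hG)"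
proof -
  note T = h[THEN homD(1)] h[THEN homD(2)] h[THEN homD(3)] h[THEN homO(1)] h[THEN homO(2)]
  have n: "((f1 \<otimes> g1) \<otimes> (f2 \<otimes> g2)) \<cdot> Bs a b p q = Bs a' b' p' q' \<cdot> ((f1 \<otimes> f2) \<otimes> (g1 \<otimes> g2))"
    using NAT_s[of f1 f2 g1 g2] T by simp
  have "((f1 \<otimes> g1) \<otimes> (f2 \<otimes> g2)) \<cdot> (Bs a b p q \<cdot> (iF \<otimes> iG)) = Bs a' b' p' q' \<cdot> (((f1 \<otimes> f2) \<otimes> (g1 \<otimes> g2)) \<cdot> (iF \<otimes> iG))"
    using T by (simp add: ctx1[OF n] comp_assoc_r)
  also have "\<dots> = Bs a' b' p' q' \<cdot> (((f1 \<otimes> f2) \<cdot> iF) \<otimes> ((g1 \<otimes> g2) \<cdot> iG))"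
    using T by (simp add: interchange)
  also have "\<dots> = Bs a' b' p' q' \<cdot> ((iF' \<cdot> hF) \<otimes> (iG' \<cdot> hG))" using eF eG by simp
  also have "\<dots> = (Bs a' b' p' q' \<cdot> (iF' \<otimes> iG')) \<cdot> (hF \<otimes> hG)"
    using T by (simp add: interchange comp_assoc_r)
  finally show ?thesis .
qed


lemma L_icounit_l:
  assumes h: "ob x" "ob y" "hom B i0F e \<one>" "hom B i0G e' \<one>" "hom B iF x (e \<odot> x)" "hom B iG y (e' \<odot> y)"
  and eF: "(i0F \<otimes> \<iota> x) \<cdot> iF = \<iota> x" and eG: "(i0G \<otimes> \<iota> y) \<cdot> iG = \<iota> y"
  shows "((i0F \<otimes> i0G) \<otimes> \<iota> (x \<odot> y)) \<cdot> (Bs e x e' y \<cdot> (iF \<otimes> iG)) = \<iota> (x \<odot> y)"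
proof -
  note T = h(1-2) h(3-)[THEN homD(1)] h(3-)[THEN homD(2)] h(3-)[THEN homD(3)] h(3-)[THEN homO(1)] h(3-)[THEN homO(2)]
  have n: "((i0F \<otimes> i0G) \<otimes> \<iota> (x \<odot> y)) \<cdot> Bs e x e' y = ((i0F \<otimes> \<iota> x) \<otimes> (i0G \<otimes> \<iota> y))"
    using NAT_s[of i0F "\<iota> x" i0G "\<iota> y"] T by (simp add: Tar_Idn Tar_unit)
  have "((i0F \<otimes> i0G) \<otimes> \<iota> (x \<odot> y)) \<cdot> (Bs e x e' y \<cdot> (iF \<otimes> iG)) = ((i0F \<otimes> \<iota> x) \<otimes> (i0G \<otimes> \<iota> y)) \<cdot> (iF \<otimes> iG)"
    using T by (simp add: ctx1[OF n])
  also have "\<dots> = ((i0F \<otimes> \<iota> x) \<cdot> iF) \<otimes> ((i0G \<otimes> \<iota> y) \<cdot> iG)"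
    using T by (simp add: interchange)
  also have "\<dots> = \<iota> (x \<odot> y)" using eF eG T by (simp add: Tar_Idn)
  finally show ?thesis .
qed

lemma L_icounit_r:
  assumes h: "ob x" "ob y" "hom B i0F e \<one>" "hom B i0G e' \<one>" "hom B iF x (x \<odot> e)" "hom B iG y (y \<odot> e')"
  and eF: "(\<iota> x \<otimes> i0F) \<cdot> iF = \<iota> x" and eG: "(\<iota> y \<otimes> i0G) \<cdot> iG = \<iota> y"
  shows "(\<iota> (x \<odot> y) \<otimes> (i0F \<otimes> i0G)) \<cdot> (Bs x e y e' \<cdot> (iF \<otimes> iG)) = \<iota> (x \<odot> y)"
proof -
  note T = h(1-2) h(3-)[THEN homD(1)] h(3-)[THEN homD(2)] h(3-)[THEN homD(3)] h(3-)[THEN homO(1)] h(3-)[THEN homO(2)]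
  have n: "(\<iota> (x \<odot> y) \<otimes> (i0F \<otimes> i0G)) \<cdot> Bs x e y e' = ((\<iota> x \<otimes> i0F) \<otimes> (\<iota> y \<otimes> i0G))"
    using NAT_s[of "\<iota> x" i0F "\<iota> y" i0G] T by (simp add: Tar_Idn Tar_unit cinv_id)
  have "(\<iota> (x \<odot> y) \<otimes> (i0F \<otimes> i0G)) \<cdot> (Bs x e y e' \<cdot> (iF \<otimes> iG)) = ((\<iota> x \<otimes> i0F) \<otimes> (\<iota> y \<otimes> i0G)) \<cdot> (iF \<otimes> iG)"
    using T by (simp add: ctx1[OF n])
  also have "\<dots> = ((\<iota> x \<otimes> i0F) \<cdot> iF) \<otimes> ((\<iota> y \<otimes> i0G) \<cdot> iG)"
    using T by (simp add: interchange)
  also have "\<dots> = \<iota> (x \<odot> y)" using eF eG T by (simp add: Tar_Idn)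
  finally show ?thesis .
qed

lemma L_icoassoc:
  assumes h: "ob a" "ob b" "ob z" "ob p" "ob q" "ob w"
  "hom B iF1 s (a \<odot> b)" "hom B iF2 u (s \<odot> z)" "hom B iF3 s2 (b \<odot> z)" "hom B iF4 u (a \<odot> s2)"
  "hom B iG1 t (p \<odot> q)" "hom B iG2 v (t \<odot> w)" "hom B iG3 t2 (q \<odot> w)" "hom B iG4 v (p \<odot> t2)"
  and eF: "(iF1 \<otimes> \<iota> z) \<cdot> iF2 = (\<iota> a \<otimes> iF3) \<cdot> iF4" and eG: "(iG1 \<otimes> \<iota> w) \<cdot> iG2 = (\<iota> p \<otimes> iG3) \<cdot> iG4"
  shows "((Bs a b p q \<cdot> (iF1 \<otimes> iG1)) \<otimes> \<iota> (z \<odot> w)) \<cdot> (Bs s z t w \<cdot> (iF2 \<otimes> iG2)) =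
         (\<iota> (a \<odot> p) \<otimes> (Bs b z q w \<cdot> (iF3 \<otimes> iG3))) \<cdot> (Bs a s2 p t2 \<cdot> (iF4 \<otimes> iG4))"
proof -
  note T = h(1-6) h(7-)[THEN homD(1)] h(7-)[THEN homD(2)] h(7-)[THEN homD(3)] h(7-)[THEN homO(1)] h(7-)[THEN homO(2)]
  have n1: "((iF1 \<otimes> iG1) \<otimes> \<iota> (z \<odot> w)) \<cdot> Bs s z t w = Bs (a \<odot> b) z (p \<odot> q) w \<cdot> ((iF1 \<otimes> \<iota> z) \<otimes> (iG1 \<otimes> \<iota> w))"
    using NAT_s[of iF1 "\<iota> z" iG1 "\<iota> w"] T by (simp add: Tar_Idn)
  have n2: "(\<iota> (a \<odot> p) \<otimes> (iF3 \<otimes> iG3)) \<cdot> Bs a s2 p t2 = Bs a (b \<odot> z) p (q \<odot> w) \<cdot> ((\<iota> a \<otimes> iF3) \<otimes> (\<iota> p \<otimes> iG3))"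
    using NAT_s[of "\<iota> a" iF3 "\<iota> p" iG3] T by (simp add: Tar_Idn)
  have br: "(Bs a b p q \<otimes> \<iota> (z \<odot> w)) \<cdot> Bs (a \<odot> b) z (p \<odot> q) w = (\<iota> (a \<odot> p) \<otimes> Bs b z q w) \<cdot> Bs a (b \<odot> z) p (q \<odot> w)"
    using T by (intro BR_C) auto
  have "((Bs a b p q \<cdot> (iF1 \<otimes> iG1)) \<otimes> \<iota> (z \<odot> w)) \<cdot> (Bs s z t w \<cdot> (iF2 \<otimes> iG2)) =
     (Bs a b p q \<otimes> \<iota> (z \<odot> w)) \<cdot> (((iF1 \<otimes> iG1) \<otimes> \<iota> (z \<odot> w)) \<cdot> (Bs s z t w \<cdot> (iF2 \<otimes> iG2)))"
    using T by (simp add: split_r comp_assoc_r)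
  also have "\<dots> = (Bs a b p q \<otimes> \<iota> (z \<odot> w)) \<cdot> (Bs (a \<odot> b) z (p \<odot> q) w \<cdot> (((iF1 \<otimes> \<iota> z) \<otimes> (iG1 \<otimes> \<iota> w)) \<cdot> (iF2 \<otimes> iG2)))"
    using T by (simp add: ctx[OF n1])
  also have "\<dots> = (Bs a b p q \<otimes> \<iota> (z \<odot> w)) \<cdot> (Bs (a \<odot> b) z (p \<odot> q) w \<cdot> (((iF1 \<otimes> \<iota> z) \<cdot> iF2) \<otimes> ((iG1 \<otimes> \<iota> w) \<cdot> iG2)))"
    using T by (simp add: interchange)
  also have "\<dots> = (Bs a b p q \<otimes> \<iota> (z \<odot> w)) \<cdot> (Bs (a \<odot> b) z (p \<odot> q) w \<cdot> (((\<iota> a \<otimes> iF3) \<cdot> iF4) \<otimes> ((\<iota> p \<otimes> iG3) \<cdot> iG4)))"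
    using eF eG by simp
  also have "\<dots> = (Bs a b p q \<otimes> \<iota> (z \<odot> w)) \<cdot> (Bs (a \<odot> b) z (p \<odot> q) w \<cdot> (((\<iota> a \<otimes> iF3) \<otimes> (\<iota> p \<otimes> iG3)) \<cdot> (iF4 \<otimes> iG4)))"
    using T by (simp add: interchange)
  also have "\<dots> = (\<iota> (a \<odot> p) \<otimes> Bs b z q w) \<cdot> (Bs a (b \<odot> z) p (q \<odot> w) \<cdot> (((\<iota> a \<otimes> iF3) \<otimes> (\<iota> p \<otimes> iG3)) \<cdot> (iF4 \<otimes> iG4)))"
    using T by (simp add: ctx[OF br])
  also have "\<dots> = (\<iota> (a \<odot> p) \<otimes> Bs b z q w) \<cdot> ((\<iota> (a \<odot> p) \<otimes> (iF3 \<otimes> iG3)) \<cdot> (Bs a s2 p t2 \<cdot> (iF4 \<otimes> iG4)))"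
    using T by (simp add: ctx[OF n2[symmetric]])
  also have "\<dots> = (\<iota> (a \<odot> p) \<otimes> (Bs b z q w \<cdot> (iF3 \<otimes> iG3))) \<cdot> (Bs a s2 p t2 \<cdot> (iF4 \<otimes> iG4))"
    using T by (simp add: split_l comp_assoc_r)
  finally show ?thesis .
qed


lemma L_frob1:
  assumes h: "ob a" "ob b" "ob z" "ob p" "ob q" "ob w"
  "hom B iF1 s (a \<odot> b)" "hom B rF' (s \<odot> z) u" "hom B rF3 (b \<odot> z) s2" "hom B iF' u (a \<odot> s2)"
  "hom B iG1 t (p \<odot> q)" "hom B rG' (t \<odot> w) v" "hom B rG3 (q \<odot> w) t2" "hom B iG' v (p \<odot> t2)"
  and eF: "iF' \<cdot> rF' = (\<iota> a \<otimes> rF3) \<cdot> (iF1 \<otimes> \<iota> z)" and eG: "iG' \<cdot> rG' = (\<iota> p \<otimes> rG3) \<cdot> (iG1 \<otimes> \<iota> w)"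
  shows "(Bs a s2 p t2 \<cdot> (iF' \<otimes> iG')) \<cdot> ((rF' \<otimes> rG') \<cdot> Bt s z t w) =
         (\<iota> (a \<odot> p) \<otimes> ((rF3 \<otimes> rG3) \<cdot> Bt b z q w)) \<cdot> ((Bs a b p q \<cdot> (iF1 \<otimes> iG1)) \<otimes> \<iota> (z \<odot> w))"
proof -
  note T = h(1-6) h(7-)[THEN homD(1)] h(7-)[THEN homD(2)] h(7-)[THEN homD(3)] h(7-)[THEN homO(1)] h(7-)[THEN homO(2)]
  have n1: "Bs a s2 p t2 \<cdot> ((\<iota> a \<otimes> rF3) \<otimes> (\<iota> p \<otimes> rG3)) = (\<iota> (a \<odot> p) \<otimes> (rF3 \<otimes> rG3)) \<cdot> Bs a (b \<odot> z) p (q \<odot> w)"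
    using NAT_s[of "\<iota> a" rF3 "\<iota> p" rG3] T by (simp add: Tar_Idn)
  have n2: "((iF1 \<otimes> \<iota> z) \<otimes> (iG1 \<otimes> \<iota> w)) \<cdot> Bt s z t w = Bt (a \<odot> b) z (p \<odot> q) w \<cdot> ((iF1 \<otimes> iG1) \<otimes> \<iota> (z \<odot> w))"
    using NAT_t[of iF1 "\<iota> z" iG1 "\<iota> w"] T by (simp add: Tar_Idn)
  have br: "Bs a (b \<odot> z) p (q \<odot> w) \<cdot> Bt (a \<odot> b) z (p \<odot> q) w = (\<iota> (a \<odot> p) \<otimes> Bt b z q w) \<cdot> (Bs a b p q \<otimes> \<iota> (z \<odot> w))"
    using T by (intro BR_F1) auto
  have "(Bs a s2 p t2 \<cdot> (iF' \<otimes> iG')) \<cdot> ((rF' \<otimes> rG') \<cdot> Bt s z t w) =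
     Bs a s2 p t2 \<cdot> ((iF' \<otimes> iG') \<cdot> ((rF' \<otimes> rG') \<cdot> Bt s z t w))"
    using T by (simp add: comp_assoc_r)
  also have "\<dots> = Bs a s2 p t2 \<cdot> (((iF' \<cdot> rF') \<otimes> (iG' \<cdot> rG')) \<cdot> Bt s z t w)"
    using T by (intro arg_cong[where f="\<lambda>x. Bs a s2 p t2 \<cdot> x"] interchange_c) simp_all
  also have "\<dots> = Bs a s2 p t2 \<cdot> ((((\<iota> a \<otimes> rF3) \<cdot> (iF1 \<otimes> \<iota> z)) \<otimes> ((\<iota> p \<otimes> rG3) \<cdot> (iG1 \<otimes> \<iota> w))) \<cdot> Bt s z t w)"
    using eF eG by simp
  also have "\<dots> = Bs a s2 p t2 \<cdot> (((\<iota> a \<otimes> rF3) \<otimes> (\<iota> p \<otimes> rG3)) \<cdot> (((iF1 \<otimes> \<iota> z) \<otimes> (iG1 \<otimes> \<iota> w)) \<cdot> Bt s z t w))"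
    using T by (intro arg_cong[where f="\<lambda>x. Bs a s2 p t2 \<cdot> x"] interchange_c[symmetric]) simp_all
  also have "\<dots> = (\<iota> (a \<odot> p) \<otimes> (rF3 \<otimes> rG3)) \<cdot> (Bs a (b \<odot> z) p (q \<odot> w) \<cdot> (((iF1 \<otimes> \<iota> z) \<otimes> (iG1 \<otimes> \<iota> w)) \<cdot> Bt s z t w))"
    using T by (simp add: ctx[OF n1])
  also have "\<dots> = (\<iota> (a \<odot> p) \<otimes> (rF3 \<otimes> rG3)) \<cdot> (Bs a (b \<odot> z) p (q \<odot> w) \<cdot> (Bt (a \<odot> b) z (p \<odot> q) w \<cdot> ((iF1 \<otimes> iG1) \<otimes> \<iota> (z \<odot> w))))"
    using n2 by simp
  also have "\<dots> = (\<iota> (a \<odot> p) \<otimes> (rF3 \<otimes> rG3)) \<cdot> ((\<iota> (a \<odot> p) \<otimes> Bt b z q w) \<cdot> ((Bs a b p q \<otimes> \<iota> (z \<odot> w)) \<cdot> ((iF1 \<otimes> iG1) \<otimes> \<iota> (z \<odot> w))))"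
    using T by (simp add: ctx[OF br])
  also have "\<dots> = (\<iota> (a \<odot> p) \<otimes> ((rF3 \<otimes> rG3) \<cdot> Bt b z q w)) \<cdot> ((Bs a b p q \<cdot> (iF1 \<otimes> iG1)) \<otimes> \<iota> (z \<odot> w))"
    using T by (simp add: split_l split_r comp_assoc_r)
  finally show ?thesis .
qed

lemma L_frob2:
  assumes h: "ob a" "ob b" "ob z" "ob p" "ob q" "ob w"
  "hom B rF1 (a \<odot> b) s" "hom B rF' (a \<odot> s2) u" "hom B iF3 s2 (b \<odot> z)" "hom B iF' u (s \<odot> z)"
  "hom B rG1 (p \<odot> q) t" "hom B rG' (p \<odot> t2) v" "hom B iG3 t2 (q \<odot> w)" "hom B iG' v (t \<odot> w)"
  and eF: "iF' \<cdot> rF' = (rF1 \<otimes> \<iota> z) \<cdot> (\<iota> a \<otimes> iF3)" and eG: "iG' \<cdot> rG' = (rG1 \<otimes> \<iota> w) \<cdot> (\<iota> p \<otimes> iG3)"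
  shows "(Bs s z t w \<cdot> (iF' \<otimes> iG')) \<cdot> ((rF' \<otimes> rG') \<cdot> Bt a s2 p t2) =
         (((rF1 \<otimes> rG1) \<cdot> Bt a b p q) \<otimes> \<iota> (z \<odot> w)) \<cdot> (\<iota> (a \<odot> p) \<otimes> (Bs b z q w \<cdot> (iF3 \<otimes> iG3)))"
proof -
  note T = h(1-6) h(7-)[THEN homD(1)] h(7-)[THEN homD(2)] h(7-)[THEN homD(3)] h(7-)[THEN homO(1)] h(7-)[THEN homO(2)]
  have n1: "Bs s z t w \<cdot> ((rF1 \<otimes> \<iota> z) \<otimes> (rG1 \<otimes> \<iota> w)) = ((rF1 \<otimes> rG1) \<otimes> \<iota> (z \<odot> w)) \<cdot> Bs (a \<odot> b) z (p \<odot> q) w"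
    using NAT_s[of rF1 "\<iota> z" rG1 "\<iota> w"] T by (simp add: Tar_Idn)
  have n2: "((\<iota> a \<otimes> iF3) \<otimes> (\<iota> p \<otimes> iG3)) \<cdot> Bt a s2 p t2 = Bt a (b \<odot> z) p (q \<odot> w) \<cdot> (\<iota> (a \<odot> p) \<otimes> (iF3 \<otimes> iG3))"
    using NAT_t[of "\<iota> a" iF3 "\<iota> p" iG3] T by (simp add: Tar_Idn)
  have br: "Bs (a \<odot> b) z (p \<odot> q) w \<cdot> Bt a (b \<odot> z) p (q \<odot> w) = (Bt a b p q \<otimes> \<iota> (z \<odot> w)) \<cdot> (\<iota> (a \<odot> p) \<otimes> Bs b z q w)"
    using T by (intro BR_F2) auto
  have "(Bs s z t w \<cdot> (iF' \<otimes> iG')) \<cdot> ((rF' \<otimes> rG') \<cdot> Bt a s2 p t2) =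
     Bs s z t w \<cdot> ((iF' \<otimes> iG') \<cdot> ((rF' \<otimes> rG') \<cdot> Bt a s2 p t2))"
    using T by (simp add: comp_assoc_r)
  also have "\<dots> = Bs s z t w \<cdot> (((iF' \<cdot> rF') \<otimes> (iG' \<cdot> rG')) \<cdot> Bt a s2 p t2)"
    using T by (intro arg_cong[where f="\<lambda>x. Bs s z t w \<cdot> x"] interchange_c) simp_all
  also have "\<dots> = Bs s z t w \<cdot> ((((rF1 \<otimes> \<iota> z) \<cdot> (\<iota> a \<otimes> iF3)) \<otimes> ((rG1 \<otimes> \<iota> w) \<cdot> (\<iota> p \<otimes> iG3))) \<cdot> Bt a s2 p t2)"
    using eF eG by simp
  also have "\<dots> = Bs s z t w \<cdot> (((rF1 \<otimes> \<iota> z) \<otimes> (rG1 \<otimes> \<iota> w)) \<cdot> (((\<iota> a \<otimes> iF3) \<otimes> (\<iota> p \<otimes> iG3)) \<cdot> Bt a s2 p t2))"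
    using T by (intro arg_cong[where f="\<lambda>x. Bs s z t w \<cdot> x"] interchange_c[symmetric]) simp_all
  also have "\<dots> = ((rF1 \<otimes> rG1) \<otimes> \<iota> (z \<odot> w)) \<cdot> (Bs (a \<odot> b) z (p \<odot> q) w \<cdot> (((\<iota> a \<otimes> iF3) \<otimes> (\<iota> p \<otimes> iG3)) \<cdot> Bt a s2 p t2))"
    using T by (simp add: ctx[OF n1])
  also have "\<dots> = ((rF1 \<otimes> rG1) \<otimes> \<iota> (z \<odot> w)) \<cdot> (Bs (a \<odot> b) z (p \<odot> q) w \<cdot> (Bt a (b \<odot> z) p (q \<odot> w) \<cdot> (\<iota> (a \<odot> p) \<otimes> (iF3 \<otimes> iG3))))"
    using n2 by simp
  also have "\<dots> = ((rF1 \<otimes> rG1) \<otimes> \<iota> (z \<odot> w)) \<cdot> ((Bt a b p q \<otimes> \<iota> (z \<odot> w)) \<cdot> ((\<iota> (a \<odot> p) \<otimes> Bs b z q w) \<cdot> (\<iota> (a \<odot> p) \<otimes> (iF3 \<otimes> iG3))))"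
    using T by (simp add: ctx[OF br])
  also have "\<dots> = (((rF1 \<otimes> rG1) \<cdot> Bt a b p q) \<otimes> \<iota> (z \<odot> w)) \<cdot> (\<iota> (a \<odot> p) \<otimes> (Bs b z q w \<cdot> (iF3 \<otimes> iG3)))"
    using T by (simp add: split_l split_r comp_assoc_r)
  finally show ?thesis .
qed

end



locale FR = SBM B for B :: "('bo,'bm) bmoncat" +
  fixes A :: "('ao,'am) moncat"
  assumes sA: "strict_monoidal_category A"
begin

lemma monA: "monoidal_category A"
  using sA unfolding strict_monoidal_category_def by (rule conjunct1)
lemma catA: "category A"
  using monA unfolding monoidal_category_def by (rule conjunct1)

lemma A_ob_Unt[simp]: "Unt A \<in> Ob A"
  using monA unfolding monoidal_category_def by simp
lemma A_ob_Tob[simp]: "X \<in> Ob A \<Longrightarrow> Y \<in> Ob A \<Longrightarrow> Tob A X Y \<in> Ob A"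
  using monA unfolding monoidal_category_def by simp
lemma A_ar_Tar[simp]: "f \<in> Ar A \<Longrightarrow> g \<in> Ar A \<Longrightarrow> Tar A f g \<in> Ar A"
  using monA unfolding monoidal_category_def hom_def by simp
lemma A_Dm_Tar[simp]: "f \<in> Ar A \<Longrightarrow> g \<in> Ar A \<Longrightarrow> Dm A (Tar A f g) = Tob A (Dm A f) (Dm A g)"
  using monA unfolding monoidal_category_def hom_def by simp
lemma A_Cd_Tar[simp]: "f \<in> Ar A \<Longrightarrow> g \<in> Ar A \<Longrightarrow> Cd A (Tar A f g) = Tob A (Cd A f) (Cd A g)"
  using monA unfolding monoidal_category_def hom_def by simp
lemma A_ob_Dm[simp]: "f \<in> Ar A \<Longrightarrow> Dm A f \<in> Ob A"
  using catA unfolding category_def by simp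
lemma A_ob_Cd[simp]: "f \<in> Ar A \<Longrightarrow> Cd A f \<in> Ob A"
  using catA unfolding category_def by simp
lemma A_Tob_assoc[simp]: "X \<in> Ob A \<Longrightarrow> Y \<in> Ob A \<Longrightarrow> Z \<in> Ob A \<Longrightarrow> Tob A (Tob A X Y) Z = Tob A X (Tob A Y Z)"
  using sA unfolding strict_monoidal_category_def by simp
lemma A_Tob_unit[simp]: "X \<in> Ob A \<Longrightarrow> Tob A (Unt A) X = X" "X \<in> Ob A \<Longrightarrow> Tob A X (Unt A) = X"
  using sA unfolding strict_monoidal_category_def by simp_all


abbreviation fr where "fr F \<equiv> frobenius_monoidal_functor A B F"

lemma fr_mon: "fr F \<Longrightarrow> monoidal_functor A B F" by (simp add: frobenius_monoidal_functor_def)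
lemma fr_com: "fr F \<Longrightarrow> comonoidal_functor A B F" by (simp add: frobenius_monoidal_functor_def)
lemma fr_func: "fr F \<Longrightarrow> is_functor A B (FO F) (FM F)" by (simp add: frobenius_monoidal_functor_def monoidal_functor_def)

lemma F_ob[simp]: "fr F \<Longrightarrow> X \<in> Ob A \<Longrightarrow> ob (FO F X)"
  using fr_func unfolding is_functor_def by blast
lemma F_hom: "fr F \<Longrightarrow> f \<in> Ar A \<Longrightarrow> hom B (FM F f) (FO F (Dm A f)) (FO F (Cd A f))"
  using fr_func unfolding is_functor_def by blast
lemma F_ar[simp]: "fr F \<Longrightarrow> f \<in> Ar A \<Longrightarrow> ar (FM F f)"
  and F_dm[simp]: "fr F \<Longrightarrow> f \<in> Ar A \<Longrightarrow> dm (FM F f) = FO F (Dm A f)"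
  and F_cd[simp]: "fr F \<Longrightarrow> f \<in> Ar A \<Longrightarrow> cd (FM F f) = FO F (Cd A f)"
  using F_hom unfolding hom_def by blast+
lemma F_id: "fr F \<Longrightarrow> X \<in> Ob A \<Longrightarrow> FM F (Idn A X) = \<iota> (FO F X)"
  using fr_func unfolding is_functor_def by blast
lemma F_comp: "fr F \<Longrightarrow> f \<in> Ar A \<Longrightarrow> g \<in> Ar A \<Longrightarrow> Cd A f = Dm A g \<Longrightarrow> FM F (Cmp A g f) = FM F g \<cdot> FM F f"
  using fr_func unfolding is_functor_def by blast

lemma Fr_hom: "fr F \<Longrightarrow> X \<in> Ob A \<Longrightarrow> Y \<in> Ob A \<Longrightarrow> hom B (Fr F X Y) (FO F X \<odot> FO F Y) (FO F (Tob A X Y))"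
  using fr_mon unfolding monoidal_functor_def by blast
lemma Fr0_hom: "fr F \<Longrightarrow> hom B (Fr0 F) \<one> (FO F (Unt A))"
  using fr_mon unfolding monoidal_functor_def by blast
lemma Fr_nat: "fr F \<Longrightarrow> f \<in> Ar A \<Longrightarrow> g \<in> Ar A \<Longrightarrow>
  Fr F (Cd A f) (Cd A g) \<cdot> (FM F f \<otimes> FM F g) = FM F (Tar A f g) \<cdot> Fr F (Dm A f) (Dm A g)"
  using fr_mon unfolding monoidal_functor_def by blast
lemma Fr_assoc: "fr F \<Longrightarrow> X \<in> Ob A \<Longrightarrow> Y \<in> Ob A \<Longrightarrow> Z \<in> Ob A \<Longrightarrow>
  Fr F (Tob A X Y) Z \<cdot> (Fr F X Y \<otimes> \<iota> (FO F Z)) = Fr F X (Tob A Y Z) \<cdot> (\<iota> (FO F X) \<otimes> Fr F Y Z)"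
  using fr_mon unfolding monoidal_functor_def by blast
lemma Fr_unit: "fr F \<Longrightarrow> X \<in> Ob A \<Longrightarrow> Fr F (Unt A) X \<cdot> (Fr0 F \<otimes> \<iota> (FO F X)) = \<iota> (FO F X)"
   "fr F \<Longrightarrow> X \<in> Ob A \<Longrightarrow> Fr F X (Unt A) \<cdot> (\<iota> (FO F X) \<otimes> Fr0 F) = \<iota> (FO F X)"
  using fr_mon unfolding monoidal_functor_def by blast+

lemma Fi_hom: "fr F \<Longrightarrow> X \<in> Ob A \<Longrightarrow> Y \<in> Ob A \<Longrightarrow> hom B (Fi F X Y) (FO F (Tob A X Y)) (FO F X \<odot> FO F Y)"
  using fr_com unfolding comonoidal_functor_def by blast
lemma Fi0_hom: "fr F \<Longrightarrow> hom B (Fi0 F) (FO F (Unt A)) \<one>"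
  using fr_com unfolding comonoidal_functor_def by blast
lemma Fi_nat: "fr F \<Longrightarrow> f \<in> Ar A \<Longrightarrow> g \<in> Ar A \<Longrightarrow>
  (FM F f \<otimes> FM F g) \<cdot> Fi F (Dm A f) (Dm A g) = Fi F (Cd A f) (Cd A g) \<cdot> FM F (Tar A f g)"
  using fr_com unfolding comonoidal_functor_def by blast
lemma Fi_coassoc: "fr F \<Longrightarrow> X \<in> Ob A \<Longrightarrow> Y \<in> Ob A \<Longrightarrow> Z \<in> Ob A \<Longrightarrow>
  (Fi F X Y \<otimes> \<iota> (FO F Z)) \<cdot> Fi F (Tob A X Y) Z = (\<iota> (FO F X) \<otimes> Fi F Y Z) \<cdot> Fi F X (Tob A Y Z)"
  using fr_com unfolding comonoidal_functor_def by blast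
lemma Fi_counit: "fr F \<Longrightarrow> X \<in> Ob A \<Longrightarrow> (Fi0 F \<otimes> \<iota> (FO F X)) \<cdot> Fi F (Unt A) X = \<iota> (FO F X)"
   "fr F \<Longrightarrow> X \<in> Ob A \<Longrightarrow> (\<iota> (FO F X) \<otimes> Fi0 F) \<cdot> Fi F X (Unt A) = \<iota> (FO F X)"
  using fr_com unfolding comonoidal_functor_def by blast+
lemma F_frob: "fr F \<Longrightarrow> X \<in> Ob A \<Longrightarrow> Y \<in> Ob A \<Longrightarrow> Z \<in> Ob A \<Longrightarrow>
   Fi F X (Tob A Y Z) \<cdot> Fr F (Tob A X Y) Z = (\<iota> (FO F X) \<otimes> Fr F Y Z) \<cdot> (Fi F X Y \<otimes> \<iota> (FO F Z))"
  "fr F \<Longrightarrow> X \<in> Ob A \<Longrightarrow> Y \<in> Ob A \<Longrightarrow> Z \<in> Ob A \<Longrightarrow>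
   Fi F (Tob A X Y) Z \<cdot> Fr F X (Tob A Y Z) = (Fr F X Y \<otimes> \<iota> (FO F Z)) \<cdot> (\<iota> (FO F X) \<otimes> Fi F Y Z)"
  unfolding frobenius_monoidal_functor_def by blast+

lemma T_sel: "FO (frob_tensor B F G) X = FO F X \<odot> FO G X"
  "FM (frob_tensor B F G) f = FM F f \<otimes> FM G f"
  "Fr (frob_tensor B F G) X Y = (Fr F X Y \<otimes> Fr G X Y) \<cdot> Bt (FO F X) (FO F Y) (FO G X) (FO G Y)"
  "Fr0 (frob_tensor B F G) = Fr0 F \<otimes> Fr0 G"
  "Fi (frob_tensor B F G) X Y = Bs (FO F X) (FO F Y) (FO G X) (FO G Y) \<cdot> (Fi F X Y \<otimes> Fi G X Y)"
  "Fi0 (frob_tensor B F G) = Fi0 F \<otimes> Fi0 G"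
  by (simp_all add: frob_tensor_def)


lemma Fr_ty[simp]: "fr F \<Longrightarrow> X \<in> Ob A \<Longrightarrow> Y \<in> Ob A \<Longrightarrow> ar (Fr F X Y)"
  "fr F \<Longrightarrow> X \<in> Ob A \<Longrightarrow> Y \<in> Ob A \<Longrightarrow> dm (Fr F X Y) = FO F X \<odot> FO F Y"
  "fr F \<Longrightarrow> X \<in> Ob A \<Longrightarrow> Y \<in> Ob A \<Longrightarrow> cd (Fr F X Y) = FO F (Tob A X Y)"
  using Fr_hom unfolding hom_def by blast+
lemma Fi_ty[simp]: "fr F \<Longrightarrow> X \<in> Ob A \<Longrightarrow> Y \<in> Ob A \<Longrightarrow> ar (Fi F X Y)"
  "fr F \<Longrightarrow> X \<in> Ob A \<Longrightarrow> Y \<in> Ob A \<Longrightarrow> cd (Fi F X Y) = FO F X \<odot> FO F Y"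
  "fr F \<Longrightarrow> X \<in> Ob A \<Longrightarrow> Y \<in> Ob A \<Longrightarrow> dm (Fi F X Y) = FO F (Tob A X Y)"
  using Fi_hom unfolding hom_def by blast+
lemma Fr0_ty[simp]: "fr F \<Longrightarrow> ar (Fr0 F)" "fr F \<Longrightarrow> dm (Fr0 F) = \<one>" "fr F \<Longrightarrow> cd (Fr0 F) = FO F (Unt A)"
  using Fr0_hom unfolding hom_def by blast+
lemma Fi0_ty[simp]: "fr F \<Longrightarrow> ar (Fi0 F)" "fr F \<Longrightarrow> cd (Fi0 F) = \<one>" "fr F \<Longrightarrow> dm (Fi0 F) = FO F (Unt A)"
  using Fi0_hom unfolding hom_def by blast+

lemma T_func:
  assumes F: "fr F" and G: "fr G"
  shows "is_functor A B (FO (frob_tensor B F G)) (FM (frob_tensor B F G))"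
  unfolding is_functor_def T_sel
proof (intro conjI ballI impI)
  fix X assume "X \<in> Ob A" thus "ob (FO F X \<odot> FO G X)" using F G by simp
next
  fix f assume "f \<in> Ar A" thus "hom B (FM F f \<otimes> FM G f) (FO F (Dm A f) \<odot> FO G (Dm A f)) (FO F (Cd A f) \<odot> FO G (Cd A f))"
    using F G by (simp add: hom_def)
next
  fix X assume "X \<in> Ob A" thus "FM F (Idn A X) \<otimes> FM G (Idn A X) = \<iota> (FO F X \<odot> FO G X)"
    using F G by (simp add: F_id Tar_Idn)
next
  fix f g assume "f \<in> Ar A" "g \<in> Ar A" "Cd A f = Dm A g"
  thus "FM F (Cmp A g f) \<otimes> FM G (Cmp A g f) = (FM F g \<otimes> FM G g) \<cdot> (FM F f \<otimes> FM G f)"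
    using F G by (simp add: F_comp interchange)
qed

lemma T_mon:
  assumes F: "fr F" and G: "fr G"
  shows "monoidal_functor A B (frob_tensor B F G)"
  unfolding monoidal_functor_def
proof (intro conjI ballI)
  show "is_functor A B (FO (frob_tensor B F G)) (FM (frob_tensor B F G))" using T_func[OF F G] .
next
  fix X Y assume XY: "X \<in> Ob A" "Y \<in> Ob A"
  thus "hom B (Fr (frob_tensor B F G) X Y) (FO (frob_tensor B F G) X \<odot> FO (frob_tensor B F G) Y)
     (FO (frob_tensor B F G) (Tob A X Y))"
    using F G unfolding T_sel by (simp add: hom_def)
next
  show "hom B (Fr0 (frob_tensor B F G)) \<one> (FO (frob_tensor B F G) (Unt A))"
    using F G unfolding T_sel by (simp add: hom_def)
next
  fix f g assume fg: "f \<in> Ar A" "g \<in> Ar A"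
  show "Fr (frob_tensor B F G) (Cd A f) (Cd A g) \<cdot> (FM (frob_tensor B F G) f \<otimes> FM (frob_tensor B F G) g) =
        FM (frob_tensor B F G) (Tar A f g) \<cdot> Fr (frob_tensor B F G) (Dm A f) (Dm A g)"
    unfolding T_sel
    by (rule L_rnat[where u="FO F (Tob A (Dm A f) (Dm A g))" and u'="FO F (Tob A (Cd A f) (Cd A g))"
       and v="FO G (Tob A (Dm A f) (Dm A g))" and v'="FO G (Tob A (Cd A f) (Cd A g))"])
      (use F G fg in \<open>simp_all add: hom_def Fr_nat\<close>)
next
  fix X Y Z assume xyz: "X \<in> Ob A" "Y \<in> Ob A" "Z \<in> Ob A"
  show "Fr (frob_tensor B F G) (Tob A X Y) Z \<cdot> (Fr (frob_tensor B F G) X Y \<otimes> \<iota> (FO (frob_tensor B F G) Z)) =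
        Fr (frob_tensor B F G) X (Tob A Y Z) \<cdot> (\<iota> (FO (frob_tensor B F G) X) \<otimes> Fr (frob_tensor B F G) Y Z)"
    unfolding T_sel
    by (rule L_rassoc[where u="FO F (Tob A X (Tob A Y Z))" and v="FO G (Tob A X (Tob A Y Z))"])
      (use F G xyz in \<open>simp_all add: hom_def Fr_assoc\<close>)
next
  fix X assume x: "X \<in> Ob A"
  show "Fr (frob_tensor B F G) (Unt A) X \<cdot> (Fr0 (frob_tensor B F G) \<otimes> \<iota> (FO (frob_tensor B F G) X)) =
        \<iota> (FO (frob_tensor B F G) X)"
    unfolding T_sel
    by (rule L_runit_l) (use F G x in \<open>simp_all add: hom_def Fr_unit\<close>)
  show "Fr (frob_tensor B F G) X (Unt A) \<cdot> (\<iota> (FO (frob_tensor B F G) X) \<otimes> Fr0 (frob_tensor B F G)) =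
        \<iota> (FO (frob_tensor B F G) X)"
    unfolding T_sel
    by (rule L_runit_r) (use F G x in \<open>simp_all add: hom_def Fr_unit\<close>)
qed


lemma T_com:
  assumes F: "fr F" and G: "fr G"
  shows "comonoidal_functor A B (frob_tensor B F G)"
  unfolding comonoidal_functor_def
proof (intro conjI ballI)
  show "is_functor A B (FO (frob_tensor B F G)) (FM (frob_tensor B F G))" using T_func[OF F G] .
next
  fix X Y assume XY: "X \<in> Ob A" "Y \<in> Ob A"
  thus "hom B (Fi (frob_tensor B F G) X Y) (FO (frob_tensor B F G) (Tob A X Y))
     (FO (frob_tensor B F G) X \<odot> FO (frob_tensor B F G) Y)"
    using F G unfolding T_sel by (simp add: hom_def)
next
  show "hom B (Fi0 (frob_tensor B F G)) (FO (frob_tensor B F G) (Unt A)) \<one>"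
    using F G unfolding T_sel by (simp add: hom_def)
next
  fix f g assume fg: "f \<in> Ar A" "g \<in> Ar A"
  show "(FM (frob_tensor B F G) f \<otimes> FM (frob_tensor B F G) g) \<cdot> Fi (frob_tensor B F G) (Dm A f) (Dm A g) =
        Fi (frob_tensor B F G) (Cd A f) (Cd A g) \<cdot> FM (frob_tensor B F G) (Tar A f g)"
    unfolding T_sel
    by (rule L_inat[where u="FO F (Tob A (Dm A f) (Dm A g))" and u'="FO F (Tob A (Cd A f) (Cd A g))"
       and v="FO G (Tob A (Dm A f) (Dm A g))" and v'="FO G (Tob A (Cd A f) (Cd A g))"])
      (use F G fg in \<open>simp_all add: hom_def Fi_nat\<close>)
next
  fix X Y Z assume xyz: "X \<in> Ob A" "Y \<in> Ob A" "Z \<in> Ob A"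
  show "(Fi (frob_tensor B F G) X Y \<otimes> \<iota> (FO (frob_tensor B F G) Z)) \<cdot> Fi (frob_tensor B F G) (Tob A X Y) Z =
        (\<iota> (FO (frob_tensor B F G) X) \<otimes> Fi (frob_tensor B F G) Y Z) \<cdot> Fi (frob_tensor B F G) X (Tob A Y Z)"
    unfolding T_sel
    by (rule L_icoassoc[where u="FO F (Tob A X (Tob A Y Z))" and v="FO G (Tob A X (Tob A Y Z))"])
      (use F G xyz in \<open>simp_all add: hom_def Fi_coassoc\<close>)
next
  fix X assume x: "X \<in> Ob A"
  show "(Fi0 (frob_tensor B F G) \<otimes> \<iota> (FO (frob_tensor B F G) X)) \<cdot> Fi (frob_tensor B F G) (Unt A) X =
        \<iota> (FO (frob_tensor B F G) X)"
    unfolding T_sel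
    by (rule L_icounit_l) (use F G x in \<open>simp_all add: hom_def Fi_counit\<close>)
  show "(\<iota> (FO (frob_tensor B F G) X) \<otimes> Fi0 (frob_tensor B F G)) \<cdot> Fi (frob_tensor B F G) X (Unt A) =
        \<iota> (FO (frob_tensor B F G) X)"
    unfolding T_sel
    by (rule L_icounit_r) (use F G x in \<open>simp_all add: hom_def Fi_counit\<close>)
qed

lemma tensor_fr:
  assumes F: "fr F" and G: "fr G"
  shows "fr (frob_tensor B F G)"
  unfolding frobenius_monoidal_functor_def
proof (intro conjI ballI)
  show "monoidal_functor A B (frob_tensor B F G)" using T_mon[OF F G] .
  show "comonoidal_functor A B (frob_tensor B F G)" using T_com[OF F G] .
next
  fix X Y Z assume xyz: "X \<in> Ob A" "Y \<in> Ob A" "Z \<in> Ob A"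
  show "Fi (frob_tensor B F G) X (Tob A Y Z) \<cdot> Fr (frob_tensor B F G) (Tob A X Y) Z =
    (\<iota> (FO (frob_tensor B F G) X) \<otimes> Fr (frob_tensor B F G) Y Z) \<cdot> (Fi (frob_tensor B F G) X Y \<otimes> \<iota> (FO (frob_tensor B F G) Z))"
    unfolding T_sel
    by (rule L_frob1[where u="FO F (Tob A X (Tob A Y Z))" and v="FO G (Tob A X (Tob A Y Z))"])
      (use F G xyz in \<open>simp_all add: hom_def F_frob\<close>)
  show "Fi (frob_tensor B F G) (Tob A X Y) Z \<cdot> Fr (frob_tensor B F G) X (Tob A Y Z) =
    (Fr (frob_tensor B F G) X Y \<otimes> \<iota> (FO (frob_tensor B F G) Z)) \<cdot> (\<iota> (FO (frob_tensor B F G) X) \<otimes> Fi (frob_tensor B F G) Y Z)"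
    unfolding T_sel
    by (rule L_frob2[where u="FO F (Tob A X (Tob A Y Z))" and v="FO G (Tob A X (Tob A Y Z))"])
      (use F G xyz in \<open>simp_all add: hom_def F_frob\<close>)
qed

end


context FR begin

abbreviation C where "C \<equiv> FrobCat A B"

lemma C_Ob: "Ob C = {F. fr F}" by (simp add: FrobCat_def)
lemma C_Ar: "(x \<in> Ar C) \<longleftrightarrow> (\<exists>F G \<eta>. x = (F, G, \<eta>) \<and> fr F \<and> fr G \<and> nat_trans A B F G \<eta>)"
  by (auto simp: FrobCat_def)
lemma C_Ar3: "((F, G, \<eta>) \<in> Ar C) \<longleftrightarrow> fr F \<and> fr G \<and> nat_trans A B F G \<eta>"
  by (auto simp: FrobCat_def)
lemma C_Dm[simp]: "Dm C (F, G, \<eta>) = F" and C_Cd[simp]: "Cd C (F, G, \<eta>) = G"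
  by (simp_all add: FrobCat_def)
lemma C_Idn: "Idn C F = (F, F, \<lambda>X. if X \<in> Ob A then \<iota> (FO F X) else undefined)"
  by (simp add: FrobCat_def)
lemma C_Cmp[simp]: "Cmp C (G, H, \<theta>) (F, G', \<eta>) = (F, H, \<lambda>X. if X \<in> Ob A then \<theta> X \<cdot> \<eta> X else undefined)"
  by (simp add: FrobCat_def)
lemma C_Tob: "Tob C = frob_tensor B" by (simp add: FrobCat_def)
lemma C_Tar[simp]: "Tar C (F, G, \<eta>) (F', G', \<eta>') = (frob_tensor B F F', frob_tensor B G G',
               \<lambda>X. if X \<in> Ob A then \<eta> X \<otimes> \<eta>' X else undefined)"
  by (simp add: FrobCat_def)
lemma C_Unt: "Unt C = frob_unit B" by (simp add: FrobCat_def)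
lemma C_Asc: "Asc C F G H = (frob_tensor B (frob_tensor B F G) H, frob_tensor B F (frob_tensor B G H),
               \<lambda>X. if X \<in> Ob A then \<iota> (FO F X \<odot> FO G X \<odot> FO H X) else undefined)"
  by (simp add: FrobCat_def)
lemma C_Lu: "Lu C F = (frob_tensor B (frob_unit B) F, F, \<lambda>X. if X \<in> Ob A then \<iota> (FO F X) else undefined)"
  by (simp add: FrobCat_def)
lemma C_Ru: "Ru C F = (frob_tensor B F (frob_unit B), F, \<lambda>X. if X \<in> Ob A then \<iota> (FO F X) else undefined)"
  by (simp add: FrobCat_def)
lemma C_Brd: "Brd C F G = (frob_tensor B F G, frob_tensor B G F,
               \<lambda>X. if X \<in> Ob A then \<sigma> (FO F X) (FO G X) else undefined)"
  by (simp add: FrobCat_def)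

lemma U_sel: "FO (frob_unit B) X = \<one>" "FM (frob_unit B) f = \<iota> \<one>" "Fr (frob_unit B) X Y = \<iota> \<one>"
  "Fr0 (frob_unit B) = \<iota> \<one>" "Fi (frob_unit B) X Y = \<iota> \<one>" "Fi0 (frob_unit B) = \<iota> \<one>"
  by (simp_all add: frob_unit_def)

lemma unit_fr: "fr (frob_unit B)"
  unfolding frobenius_monoidal_functor_def monoidal_functor_def comonoidal_functor_def is_functor_def U_sel
  by (simp add: hom_def Tar_Idn)

lemma nt_hom: "nat_trans A B F G \<eta> \<Longrightarrow> X \<in> Ob A \<Longrightarrow> hom B (\<eta> X) (FO F X) (FO G X)"
  unfolding nat_trans_def by blast
lemma nt_ty[simp]: "nat_trans A B F G \<eta> \<Longrightarrow> X \<in> Ob A \<Longrightarrow> ar (\<eta> X)"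
  "nat_trans A B F G \<eta> \<Longrightarrow> X \<in> Ob A \<Longrightarrow> dm (\<eta> X) = FO F X"
  "nat_trans A B F G \<eta> \<Longrightarrow> X \<in> Ob A \<Longrightarrow> cd (\<eta> X) = FO G X"
  using nt_hom unfolding hom_def by blast+
lemma nt_undef: "nat_trans A B F G \<eta> \<Longrightarrow> X \<notin> Ob A \<Longrightarrow> \<eta> X = undefined"
  unfolding nat_trans_def by blast
lemma nt_nat: "nat_trans A B F G \<eta> \<Longrightarrow> f \<in> Ar A \<Longrightarrow> FM G f \<cdot> \<eta> (Dm A f) = \<eta> (Cd A f) \<cdot> FM F f"
  unfolding nat_trans_def by blast
lemma nt_ext: "nat_trans A B F G \<eta> \<Longrightarrow> (\<lambda>X. if X \<in> Ob A then \<eta> X else undefined) = \<eta>"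
  by (auto simp: nt_undef)

lemma ntI:
  assumes "\<And>X. X \<in> Ob A \<Longrightarrow> ar (\<eta> X) \<and> dm (\<eta> X) = FO F X \<and> cd (\<eta> X) = FO G X"
    and "\<And>f. f \<in> Ar A \<Longrightarrow> FM G f \<cdot> \<eta> (Dm A f) = \<eta> (Cd A f) \<cdot> FM F f"
  shows "nat_trans A B F G (\<lambda>X. if X \<in> Ob A then \<eta> X else undefined)"
  using assms unfolding nat_trans_def hom_def by auto

lemma nt_id: "fr F \<Longrightarrow> nat_trans A B F F (\<lambda>X. if X \<in> Ob A then \<iota> (FO F X) else undefined)"
  by (rule ntI) auto

lemma nt_comp: "nat_trans A B F G \<eta> \<Longrightarrow> nat_trans A B G H \<theta> \<Longrightarrow> fr F \<Longrightarrow> fr G \<Longrightarrow> fr H \<Longrightarrow>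
  nat_trans A B F H (\<lambda>X. if X \<in> Ob A then \<theta> X \<cdot> \<eta> X else undefined)"
proof (rule ntI)
  fix f assume n: "nat_trans A B F G \<eta>" "nat_trans A B G H \<theta>" and fr: "fr F" "fr G" "fr H" and f: "f \<in> Ar A"
  have "FM H f \<cdot> (\<theta> (Dm A f) \<cdot> \<eta> (Dm A f)) = (FM H f \<cdot> \<theta> (Dm A f)) \<cdot> \<eta> (Dm A f)"
    using n fr f by (simp add: comp_assoc)
  also have "\<dots> = (\<theta> (Cd A f) \<cdot> FM G f) \<cdot> \<eta> (Dm A f)" using nt_nat[OF n(2) f] by simp
  also have "\<dots> = \<theta> (Cd A f) \<cdot> (FM G f \<cdot> \<eta> (Dm A f))" using n fr f by (simp add: comp_assoc)
  also have "\<dots> = \<theta> (Cd A f) \<cdot> (\<eta> (Cd A f) \<cdot> FM F f)" using nt_nat[OF n(1) f] by simp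
  also have "\<dots> = (\<theta> (Cd A f) \<cdot> \<eta> (Cd A f)) \<cdot> FM F f" using n fr f by (simp add: comp_assoc)
  finally show "FM H f \<cdot> (\<theta> (Dm A f) \<cdot> \<eta> (Dm A f)) = (\<theta> (Cd A f) \<cdot> \<eta> (Cd A f)) \<cdot> FM F f" .
qed auto

lemma nt_tensor: "nat_trans A B F G \<eta> \<Longrightarrow> nat_trans A B F' G' \<eta>' \<Longrightarrow> fr F \<Longrightarrow> fr G \<Longrightarrow> fr F' \<Longrightarrow> fr G' \<Longrightarrow>
  nat_trans A B (frob_tensor B F F') (frob_tensor B G G') (\<lambda>X. if X \<in> Ob A then \<eta> X \<otimes> \<eta>' X else undefined)"
proof (rule ntI)
  fix f assume n: "nat_trans A B F G \<eta>" "nat_trans A B F' G' \<eta>'" and fr: "fr F" "fr G" "fr F'" "fr G'" and f: "f \<in> Ar A"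
  show "FM (frob_tensor B G G') f \<cdot> (\<eta> (Dm A f) \<otimes> \<eta>' (Dm A f)) = (\<eta> (Cd A f) \<otimes> \<eta>' (Cd A f)) \<cdot> FM (frob_tensor B F F') f"
    unfolding T_sel using n fr f by (simp add: interchange[symmetric] nt_nat)
qed (auto simp: T_sel)


lemma C_Ar_E: assumes "x \<in> Ar C" obtains F G \<eta> where "x = (F, G, \<eta>)" "fr F" "fr G" "nat_trans A B F G \<eta>"
  using assms C_Ar by blast

lemma cat_C: "category C"
  unfolding category_def
proof (intro conjI ballI impI)
  fix f assume "f \<in> Ar C" then obtain F G \<eta> where f: "f = (F, G, \<eta>)" "fr F" "fr G" "nat_trans A B F G \<eta>" by (rule C_Ar_E)
  show "Dm C f \<in> Ob C" "Cd C f \<in> Ob C" using f by (simp_all add: C_Ob)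
  show "Cmp C (Idn C (Cd C f)) f = f" using f
    by (auto simp: C_Idn nt_undef intro!: ext)
  show "Cmp C f (Idn C (Dm C f)) = f" using f
    by (auto simp: C_Idn nt_undef intro!: ext)
next
  fix X assume "X \<in> Ob C" hence X: "fr X" by (simp add: C_Ob)
  show "Idn C X \<in> Ar C" "Dm C (Idn C X) = X" "Cd C (Idn C X) = X"
    using X nt_id[OF X] by (simp_all add: C_Idn C_Ar3)
next
  fix f g assume "f \<in> Ar C" "g \<in> Ar C" "Cd C f = Dm C g"
  then obtain F G \<eta> H \<theta> where f: "f = (F, G, \<eta>)" "fr F" "fr G" "nat_trans A B F G \<eta>"
    and g: "g = (G, H, \<theta>)" "fr H" "nat_trans A B G H \<theta>"
    by (metis C_Ar_E C_Cd C_Dm)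
  show "Cmp C g f \<in> Ar C" "Dm C (Cmp C g f) = Dm C f" "Cd C (Cmp C g f) = Cd C g"
    using f g nt_comp[of F G \<eta> H \<theta>] by (simp_all add: C_Ar3)
next
  fix f g h assume "f \<in> Ar C" "g \<in> Ar C" "h \<in> Ar C" "Cd C f = Dm C g" "Cd C g = Dm C h"
  then obtain F G \<eta> H \<theta> K \<kappa> where f: "f = (F, G, \<eta>)" "fr F" "fr G" "nat_trans A B F G \<eta>"
    and g: "g = (G, H, \<theta>)" "fr H" "nat_trans A B G H \<theta>"
    and h: "h = (H, K, \<kappa>)" "fr K" "nat_trans A B H K \<kappa>"
    by (metis C_Ar_E C_Cd C_Dm)
  show "Cmp C h (Cmp C g f) = Cmp C (Cmp C h g) f"
    using f g h by (auto simp: comp_assoc intro!: ext)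
qed


definition idT where "idT F G = (F, G, \<lambda>X. if X \<in> Ob A then \<iota> (FO F X) else undefined)"

lemma idT_Ar: assumes "fr F" "fr G" "\<And>X. X \<in> Ob A \<Longrightarrow> FO F X = FO G X" "\<And>f. f \<in> Ar A \<Longrightarrow> FM F f = FM G f"
  shows "idT F G \<in> Ar C"
  unfolding idT_def C_Ar3 using assms by (auto intro!: ntI)

lemma idT_inv: assumes "fr F" "fr G" "\<And>X. X \<in> Ob A \<Longrightarrow> FO F X = FO G X" "\<And>f. f \<in> Ar A \<Longrightarrow> FM F f = FM G f"
  shows "is_inverse C (idT F G) (idT G F)"
proof -
  have "idT G F \<in> Ar C" using assms by (intro idT_Ar) auto
  thus ?thesis unfolding is_inverse_def using assms by (auto simp: idT_def C_Idn intro!: ext)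
qed

lemma idT_iso: assumes "fr F" "fr G" "\<And>X. X \<in> Ob A \<Longrightarrow> FO F X = FO G X" "\<And>f. f \<in> Ar A \<Longrightarrow> FM F f = FM G f"
  shows "iso C (idT F G)" "cinv C (idT F G) = idT G F"
  using idT_inv[OF assms] idT_Ar[OF assms] cinv_eq[OF cat_C] unfolding iso_def by blast+

lemma C_Asc': "fr F \<Longrightarrow> fr G \<Longrightarrow> fr H \<Longrightarrow>
  Asc C F G H = idT (frob_tensor B (frob_tensor B F G) H) (frob_tensor B F (frob_tensor B G H))"
  by (auto simp: C_Asc idT_def T_sel intro!: ext)
lemma C_Lu': "fr F \<Longrightarrow> Lu C F = idT (frob_tensor B (frob_unit B) F) F"
  by (auto simp: C_Lu idT_def T_sel U_sel intro!: ext)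
lemma C_Ru': "fr F \<Longrightarrow> Ru C F = idT (frob_tensor B F (frob_unit B)) F"
  by (auto simp: C_Ru idT_def T_sel U_sel intro!: ext)

lemma Asc_iso: "fr F \<Longrightarrow> fr G \<Longrightarrow> fr H \<Longrightarrow> iso C (Asc C F G H) \<and>
  cinv C (Asc C F G H) = idT (frob_tensor B F (frob_tensor B G H)) (frob_tensor B (frob_tensor B F G) H)"
  unfolding C_Asc' by (intro conjI idT_iso) (auto simp: tensor_fr T_sel Tar_assoc)
lemma Lu_iso: "fr F \<Longrightarrow> iso C (Lu C F)"
  unfolding C_Lu' by (intro idT_iso) (auto simp: tensor_fr unit_fr T_sel U_sel Tar_unit)
lemma Ru_iso: "fr F \<Longrightarrow> iso C (Ru C F)"
  unfolding C_Ru' by (intro idT_iso) (auto simp: tensor_fr unit_fr T_sel U_sel Tar_unit)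

lemma Brd_Ar: "fr F \<Longrightarrow> fr G \<Longrightarrow> Brd C F G \<in> Ar C"
  unfolding C_Brd C_Ar3 by (auto simp: tensor_fr T_sel brd_nat' intro!: ntI)

lemma Brd_iso: "fr F \<Longrightarrow> fr G \<Longrightarrow> iso C (Brd C F G)"
proof -
  assume F: "fr F" and G: "fr G"
  let ?g = "(frob_tensor B G F, frob_tensor B F G, \<lambda>X. if X \<in> Ob A then \<tau> (FO F X) (FO G X) else undefined)"
  have g: "?g \<in> Ar C" unfolding C_Ar3 using F G by (auto simp: tensor_fr T_sel brdi_nat' intro!: ntI)
  have "is_inverse C (Brd C F G) ?g" unfolding is_inverse_def using g F G
    by (auto simp: C_Brd C_Idn T_sel Tar_Idn intro!: ext)
  thus ?thesis using Brd_Ar[OF F G] unfolding iso_def by blast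
qed

lemma C_ArE3: "x \<in> Ar C \<Longrightarrow> (\<And>F G \<eta>. x = (F, G, \<eta>) \<Longrightarrow> fr F \<Longrightarrow> fr G \<Longrightarrow> nat_trans A B F G \<eta> \<Longrightarrow> P) \<Longrightarrow> P"
  using C_Ar by blast

lemma mon_C: "monoidal_category C"
  unfolding monoidal_category_def
proof (intro conjI ballI impI)
  show "category C" by (rule cat_C)
  show "Unt C \<in> Ob C" by (simp add: C_Unt C_Ob unit_fr)
next
  fix X Y assume "X \<in> Ob C" "Y \<in> Ob C" thus "Tob C X Y \<in> Ob C" by (simp add: C_Ob C_Tob tensor_fr)
next
  fix f g assume "f \<in> Ar C" "g \<in> Ar C"
  then obtain F G \<eta> F' G' \<eta>' where f: "f = (F, G, \<eta>)" "fr F" "fr G" "nat_trans A B F G \<eta>"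
    and g: "g = (F', G', \<eta>')" "fr F'" "fr G'" "nat_trans A B F' G' \<eta>'" by (metis C_ArE3)
  show "hom C (Tar C f g) (Tob C (Dm C f) (Dm C g)) (Tob C (Cd C f) (Cd C g))"
    using f g nt_tensor[OF f(4) g(4)] by (simp add: hom_def C_Ar3 C_Tob tensor_fr)
next
  fix X Y assume "X \<in> Ob C" "Y \<in> Ob C" hence X: "fr X" and Y: "fr Y" by (simp_all add: C_Ob)
  show "Tar C (Idn C X) (Idn C Y) = Idn C (Tob C X Y)"
    using X Y by (auto simp: C_Idn C_Tob T_sel Tar_Idn intro!: ext)
next
  fix f g f' g' assume "f \<in> Ar C" "g \<in> Ar C" "f' \<in> Ar C" "g' \<in> Ar C" "Cd C f = Dm C g" "Cd C f' = Dm C g'"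
  then obtain F G \<eta> H \<theta> F' G' \<eta>' H' \<theta>' where f: "f = (F, G, \<eta>)" "fr F" "fr G" "nat_trans A B F G \<eta>"
    and g: "g = (G, H, \<theta>)" "fr H" "nat_trans A B G H \<theta>"
    and f': "f' = (F', G', \<eta>')" "fr F'" "fr G'" "nat_trans A B F' G' \<eta>'"
    and g': "g' = (G', H', \<theta>')" "fr H'" "nat_trans A B G' H' \<theta>'"
    by (metis C_ArE3 C_Cd C_Dm)
  show "Tar C (Cmp C g f) (Cmp C g' f') = Cmp C (Tar C g g') (Tar C f f')"
    using f g f' g' by (auto simp: interchange intro!: ext)
next
  fix X Y Z assume "X \<in> Ob C" "Y \<in> Ob C" "Z \<in> Ob C" hence X: "fr X" and Y: "fr Y" and Z: "fr Z" by (simp_all add: C_Ob)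
  show "iso C (Asc C X Y Z)" using Asc_iso[OF X Y Z] by blast
  show "hom C (Asc C X Y Z) (Tob C (Tob C X Y) Z) (Tob C X (Tob C Y Z))"
    using Asc_iso[OF X Y Z] by (simp add: hom_def iso_def C_Asc C_Tob)
next
  fix X assume "X \<in> Ob C" hence X: "fr X" by (simp add: C_Ob)
  show "iso C (Lu C X)" "iso C (Ru C X)" using Lu_iso[OF X] Ru_iso[OF X] by blast+
  show "hom C (Lu C X) (Tob C (Unt C) X) X" "hom C (Ru C X) (Tob C X (Unt C)) X"
    using Lu_iso[OF X] Ru_iso[OF X] by (simp_all add: hom_def iso_def C_Lu C_Ru C_Tob C_Unt)
next
  fix f g h assume "f \<in> Ar C" "g \<in> Ar C" "h \<in> Ar C"
  then obtain F G \<eta> F' G' \<eta>' F'' G'' \<eta>'' where f: "f = (F, G, \<eta>)" "fr F" "fr G" "nat_trans A B F G \<eta>"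
    and g: "g = (F', G', \<eta>')" "fr F'" "fr G'" "nat_trans A B F' G' \<eta>'"
    and h: "h = (F'', G'', \<eta>'')" "fr F''" "fr G''" "nat_trans A B F'' G'' \<eta>''" by (metis C_ArE3)
  show "Cmp C (Asc C (Cd C f) (Cd C g) (Cd C h)) (Tar C (Tar C f g) h) =
        Cmp C (Tar C f (Tar C g h)) (Asc C (Dm C f) (Dm C g) (Dm C h))"
    using f g h by (auto simp: C_Asc Tar_assoc intro!: ext)
next
  fix f assume "f \<in> Ar C"
  then obtain F G \<eta> where f: "f = (F, G, \<eta>)" "fr F" "fr G" "nat_trans A B F G \<eta>" by (metis C_ArE3)
  show "Cmp C (Lu C (Cd C f)) (Tar C (Idn C (Unt C)) f) = Cmp C f (Lu C (Dm C f))"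
    using f by (auto simp: C_Lu C_Idn C_Unt U_sel Tar_unit intro!: ext)
  show "Cmp C (Ru C (Cd C f)) (Tar C f (Idn C (Unt C))) = Cmp C f (Ru C (Dm C f))"
    using f by (auto simp: C_Ru C_Idn C_Unt U_sel Tar_unit intro!: ext)
next
  fix W X Y Z assume "W \<in> Ob C" "X \<in> Ob C" "Y \<in> Ob C" "Z \<in> Ob C"
  hence W: "fr W" and X: "fr X" and Y: "fr Y" and Z: "fr Z" by (simp_all add: C_Ob)
  show "Cmp C (Asc C W X (Tob C Y Z)) (Asc C (Tob C W X) Y Z) =
        Cmp C (Tar C (Idn C W) (Asc C X Y Z)) (Cmp C (Asc C W (Tob C X Y) Z) (Tar C (Asc C W X Y) (Idn C Z)))"
    using W X Y Z by (auto simp: C_Asc C_Idn C_Tob T_sel Tar_Idn intro!: ext)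
next
  fix X Y assume "X \<in> Ob C" "Y \<in> Ob C" hence X: "fr X" and Y: "fr Y" by (simp_all add: C_Ob)
  show "Cmp C (Tar C (Idn C X) (Lu C Y)) (Asc C X (Unt C) Y) = Tar C (Ru C X) (Idn C Y)"
    using X Y by (auto simp: C_Asc C_Idn C_Lu C_Ru C_Unt T_sel U_sel Tar_Idn intro!: ext)
qed

lemma br_C: "braided_monoidal_category C"
  unfolding braided_monoidal_category_def
proof (intro conjI ballI)
  show "monoidal_category C" by (rule mon_C)
next
  fix X Y assume "X \<in> Ob C" "Y \<in> Ob C" hence X: "fr X" and Y: "fr Y" by (simp_all add: C_Ob)
  show "iso C (Brd C X Y)" using Brd_iso[OF X Y] .
  show "hom C (Brd C X Y) (Tob C X Y) (Tob C Y X)"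
    using Brd_Ar[OF X Y] by (simp add: hom_def C_Brd C_Tob)
next
  fix f g assume "f \<in> Ar C" "g \<in> Ar C"
  then obtain F G \<eta> F' G' \<eta>' where f: "f = (F, G, \<eta>)" "fr F" "fr G" "nat_trans A B F G \<eta>"
    and g: "g = (F', G', \<eta>')" "fr F'" "fr G'" "nat_trans A B F' G' \<eta>'" by (metis C_ArE3)
  show "Cmp C (Brd C (Cd C f) (Cd C g)) (Tar C f g) = Cmp C (Tar C g f) (Brd C (Dm C f) (Dm C g))"
    using f g by (auto simp: C_Brd brd_nat' intro!: ext)
next
  fix X Y Z assume "X \<in> Ob C" "Y \<in> Ob C" "Z \<in> Ob C" hence X: "fr X" and Y: "fr Y" and Z: "fr Z" by (simp_all add: C_Ob)
  show "Cmp C (Asc C Y Z X) (Cmp C (Brd C X (Tob C Y Z)) (Asc C X Y Z)) =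
        Cmp C (Tar C (Idn C Y) (Brd C X Z)) (Cmp C (Asc C Y X Z) (Tar C (Brd C X Y) (Idn C Z)))"
    using X Y Z by (auto simp: C_Asc C_Brd C_Idn C_Tob T_sel hex1 intro!: ext)
  have ci: "\<And>P Q R. fr P \<Longrightarrow> fr Q \<Longrightarrow> fr R \<Longrightarrow> cinv C (Asc C P Q R) =
     (frob_tensor B P (frob_tensor B Q R), frob_tensor B (frob_tensor B P Q) R,
      \<lambda>X. if X \<in> Ob A then \<iota> (FO P X \<odot> FO Q X \<odot> FO R X) else undefined)"
    using Asc_iso by (auto simp: idT_def T_sel intro!: ext)
  show "Cmp C (cinv C (Asc C Z X Y)) (Cmp C (Brd C (Tob C X Y) Z) (cinv C (Asc C X Y Z))) =
        Cmp C (Tar C (Brd C X Z) (Idn C Y)) (Cmp C (cinv C (Asc C X Z Y)) (Tar C (Idn C X) (Brd C Y Z)))"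
    using X Y Z by (auto simp: ci C_Brd C_Idn C_Tob T_sel hex2 intro!: ext)
qed

end


theorem mainTheorem5:
  fixes A :: "('ao,'am) moncat" and B :: "('bo,'bm) bmoncat"
  assumes "strict_monoidal_category A"
    and "strict_braided_monoidal_category B"
  shows "(\<forall>F G. frobenius_monoidal_functor A B F \<longrightarrow> frobenius_monoidal_functor A B G \<longrightarrow>
            frobenius_monoidal_functor A B (frob_tensor B F G))
         \<and> braided_monoidal_category (FrobCat A B)"
proof -
  interpret FR B A
    by unfold_locales (use assms in auto)
  show ?thesis using tensor_fr br_C by blast
qed

end
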